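(* Let $\mathcal{H}$ be a complex separable Hilbert space, $n\in\mathbb{N}$, $b\in(0,\infty)$. Define $$H_n([0,b];\mathcal{H}) := \big\{f:[0,b]\to\mathcal{H} \,\big|\, f^{(n)}\in L^2((0,b);\mathcal{H});\ f^{(j)}\in AC([0,b];\mathcal{H}),\ f^{(j)}(0)=f^{(j)}(b)=0,\ j=0,\dots,n-1\big\}$$ with norm $\|f\|=\|f^{(n)}\|_{L^2((0,b);\mathcal{H})}$, and $$H^n_0((0,b);\mathcal{H}) := \big\{f:[0,b]\to\mathcal{H} \,\big|\, f^{(j)}\in AC([0,b];\mathcal{H}),\ j=0,\dots,n-1;\ f^{(k)}\in L^2((0,b);\mathcal{H}),\ k=0,\dots,n;\ f^{(j)}(0)=f^{(j)}(b)=0,\ j=0,\dots,n-1\big\}$$ with the standard Sobolev norm $\big(\sum_{k=0}^n\|f^{(k)}\|^2_{L^2((0,b);\mathcal{H})}\big)^{1/2}$. Then: (i) $H_n([0,b];\mathcal{H})=H^n_0((0,b);\mathcal{H})$ as sets; in particular $f\in H_n([0,b];\mathcal{H})$ implies $f^{(j)}\in L^2((0,b);\mathcal{H})$ for $j=0,\dots,n$; and the two norms are equivalent. (ii) With $d(x)=\min\{x,|b-x|\}$, $x\in(0,b)$, $$\int_0^b\big\|f^{(n)}(x)\big\|^2_{\mathcal{H}}\,dx\ >\ \frac{[(2n-1)!!]^2}{2^{2n}}\int_0^b\frac{\|f(x)\|^2_{\mathcal{H}}}{d(x)^{2n}}\,dx,\qquad f\in H^n_0((0,b);\mathcal{H})\setminus\{0\}.$$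 (iii) The constant $[(2n-1)!!]^2/2^{2n}$ in (ii) is sharp, i.e., for every $\varepsilon>0$ the inequality fails for some $f\in H^n_0((0,b);\mathcal{H})$ when the constant is replaced by $[(2n-1)!!]^2/2^{2n}+\varepsilon$.
   Context: $L^2((0,b);\mathcal{H})$ is the Bochner space of strongly measurable $\mathcal{H}$-valued functions $f$ with $\|f(\cdot)\|_{\mathcal{H}}^2$ integrable. $f\in AC([0,b];\mathcal{H})$ means $f(x)=f(x_0)+\int_{x_0}^x g(t)\,dt$ for some $g\in L^1((0,b);\mathcal{H})$ (Bochner integral), and then $f'=g$ a.e. (strong derivative). $(2n-1)!!=(2n-1)(2n-3)\cdots3\cdot1$. *)

theory Defs
  imports "HOL-Analysis.Analysis"
begin

text \<open>The Hilbert space is modelled by a type of class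
  real_inner + banach + second_countable_topology (separable Hilbert space; a complex
  Hilbert space is such a space with the real part of its inner product, same norm).\<close>

definition odd_double_fact :: "nat \<Rightarrow> nat" where
  "odd_double_fact n = (\<Prod>k\<in>{1..n}. 2 * k - 1)"

text \<open>Membership in the Bochner space L^2((0,b); H): strongly (= Borel, for separable
  targets) measurable and norm-square integrable.\<close>
definition L2_on :: "real \<Rightarrow> (real \<Rightarrow> 'a::{banach, second_countable_topology}) \<Rightarrow> bool" where
  "L2_on b g \<longleftrightarrow> set_borel_measurable lebesgue {0<..<b} g \<and>
     set_integrable lebesgue {0<..<b} (\<lambda>x. (norm (g x))\<^sup>2)"

definition L2_norm_on :: "real \<Rightarrow> (real \<Rightarrow> 'a::{banach, second_countable_topology}) \<Rightarrow> real" where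
  "L2_norm_on b g = sqrt (LINT x:{0<..<b}|lebesgue. (norm (g x))\<^sup>2)"

text \<open>f is absolutely continuous on [0,b] with strong (a.e.) derivative g, i.e.
  g in L^1((0,b);H) and f(x) = f(0) + Bochner-integral of g over [0,x] for x in [0,b].\<close>
definition AC_with_deriv :: "real \<Rightarrow> (real \<Rightarrow> 'a::{banach, second_countable_topology}) \<Rightarrow> (real \<Rightarrow> 'a) \<Rightarrow> bool" where
  "AC_with_deriv b f g \<longleftrightarrow> set_integrable lebesgue {0<..<b} g \<and>
     (\<forall>x\<in>{0..b}. f x = f 0 + (LINT t:{0..x}|lebesgue. g t))"

text \<open>g is a chain of derivatives of f up to order n on [0,b]: g 0 = f on [0,b],
  g j is AC on [0,b] with derivative g (j+1) for j < n, and the boundary conditions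
  g j 0 = g j b = 0 for j = 0..n-1.  Thus g j represents f^(j).\<close>
definition deriv_chain :: "real \<Rightarrow> nat \<Rightarrow> (real \<Rightarrow> 'a::{banach, second_countable_topology}) \<Rightarrow> (nat \<Rightarrow> real \<Rightarrow> 'a) \<Rightarrow> bool" where
  "deriv_chain b n f g \<longleftrightarrow> (\<forall>x\<in>{0..b}. g 0 x = f x) \<and>
     (\<forall>j<n. AC_with_deriv b (g j) (g (Suc j)) \<and> g j 0 = 0 \<and> g j b = 0)"

definition H_n :: "real \<Rightarrow> nat \<Rightarrow> (real \<Rightarrow> 'a::{banach, second_countable_topology}) set" where
  "H_n b n = {f. \<exists>g. deriv_chain b n f g \<and> L2_on b (g n)}"

definition H0_n :: "real \<Rightarrow> nat \<Rightarrow> (real \<Rightarrow> 'a::{banach, second_countable_topology}) set" where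
  "H0_n b n = {f. \<exists>g. deriv_chain b n f g \<and> (\<forall>k\<le>n. L2_on b (g k))}"

definition sobolev_norm :: "real \<Rightarrow> nat \<Rightarrow> (nat \<Rightarrow> real \<Rightarrow> 'a::{banach, second_countable_topology}) \<Rightarrow> real" where
  "sobolev_norm b n g = sqrt (\<Sum>k\<le>n. (L2_norm_on b (g k))\<^sup>2)"

definition dist_bd :: "real \<Rightarrow> real \<Rightarrow> real" where
  "dist_bd b x = min x \<bar>b - x\<bar>"

end

theory Submission
  imports Defs
begin


lemma nn_powr_0:
  fixes e x :: real
  assumes "e > -1" "0 < x"
  shows "(\<integral>\<^sup>+t. indicator {0<..<x} t * ennreal (t powr e) \<partial>lborel) = ennreal (x powr (e+1)/(e+1))"
proof -
  have "(\<integral>\<^sup>+t. ennreal (indicator {0..x} t * t powr e) \<partial>lborel) = ennreal (x powr (e+1)/(e+1))"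
    by (rule nn_integral_has_integral_lebesgue) (use has_integral_powr_from_0[of e x] assms in auto)
  also have "(\<integral>\<^sup>+t. ennreal (indicator {0..x} t * t powr e) \<partial>lborel) = (\<integral>\<^sup>+t. indicator {0<..<x} t * ennreal (t powr e) \<partial>lborel)"
    by (intro nn_integral_cong_AE eventually_mono[OF AE_lborel_singleton[of 0]]
       eventually_mono[OF AE_lborel_singleton[of x]]) (auto simp: indicator_def)
  finally show ?thesis .
qed

lemma nn_powr_tail:
  fixes e t a :: real
  assumes "e > 1" "0 < t" "t < a"
  shows "(\<integral>\<^sup>+x. indicator {t<..<a} x * ennreal (x powr (-e)) \<partial>lborel) = ennreal ((t powr (1-e) - a powr (1-e))/(e-1))"
proof -
  have d: "((\<lambda>x. - (x powr (1-e)) / (e-1)) has_vector_derivative (x powr (-e))) (at x within {t..a})"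
    if "x \<in> {t..a}" for x
  proof -
    have "x > 0" using that assms by auto
    have "((\<lambda>x. - (x powr (1-e)) / (e-1)) has_real_derivative (- ((1-e) * x powr (1-e-1)) / (e-1))) (at x)"
      using assms by (auto intro!: derivative_eq_intros simp: \<open>x>0\<close>)
    moreover have "- ((1-e) * x powr (1-e-1)) / (e-1) = x powr (-e)" using assms by (simp add: field_simps)
    ultimately show ?thesis by (auto simp: has_real_derivative_iff_has_vector_derivative intro: has_vector_derivative_at_within)
  qed
  have I: "((\<lambda>x. x powr (-e)) has_integral (- (a powr (1-e)) / (e-1) - - (t powr (1-e)) / (e-1))) {t..a}"
    by (rule fundamental_theorem_of_calculus) (use assms d in auto)
  have "(\<integral>\<^sup>+x. ennreal (indicator {t..a} x * x powr (-e)) \<partial>lborel) = ennreal (- (a powr (1-e)) / (e-1) - - (t powr (1-e)) / (e-1))"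
    by (rule nn_integral_has_integral_lebesgue[OF _ I]) simp
  also have "(\<integral>\<^sup>+x. ennreal (indicator {t..a} x * x powr (-e)) \<partial>lborel) = (\<integral>\<^sup>+x. indicator {t<..<a} x * ennreal (x powr (-e)) \<partial>lborel)"
  proof (intro nn_integral_cong_AE)
    have "AE x in lborel. x \<noteq> t \<and> x \<noteq> a" using AE_lborel_singleton by (intro AE_conjI) auto
    then show "AE x in lborel. ennreal (indicator {t..a} x * x powr (-e)) = indicator {t<..<a} x * ennreal (x powr (-e))"
      by eventually_elim (auto simp: indicator_def)
  qed
  finally show ?thesis by (simp add: diff_divide_distrib)
qed

lemma cs_step:
  fixes v :: "real \<Rightarrow> real" and x \<beta> :: real
  assumes [measurable]: "v \<in> borel_measurable borel" and v0: "\<And>t. 0 \<le> v t" and x: "0 < x" and b: "\<beta> < 1"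
  shows "(\<integral>\<^sup>+t. indicator {0<..<x} t * ennreal (v t) \<partial>lborel)^2 \<le>
     ennreal (x powr (1-\<beta>)/(1-\<beta>)) * (\<integral>\<^sup>+t. indicator {0<..<x} t * ennreal (t powr \<beta> * (v t)^2) \<partial>lborel)"
proof -
  define f where "f t = indicator {0<..<x} t * ennreal (t powr (-\<beta>/2))" for t :: real
  define g where "g t = indicator {0<..<x} t * ennreal (t powr (\<beta>/2) * v t)" for t :: real
  have [measurable]: "f \<in> borel_measurable borel" "g \<in> borel_measurable borel"
    unfolding f_def g_def by measurable
  have "(\<integral>\<^sup>+t. f t * g t \<partial>lborel)\<^sup>2 \<le> (\<integral>\<^sup>+t. f t ^ 2 \<partial>lborel) * (\<integral>\<^sup>+t. g t ^ 2 \<partial>lborel)"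
    by (rule Cauchy_Schwarz_nn_integral) auto
  also have "(\<integral>\<^sup>+t. f t * g t \<partial>lborel) = (\<integral>\<^sup>+t. indicator {0<..<x} t * ennreal (v t) \<partial>lborel)"
  proof (intro nn_integral_cong)
    fix t :: real
    show "f t * g t = indicator {0<..<x} t * ennreal (v t)"
    proof (cases "t \<in> {0<..<x}")
      case True
      then have "t powr (-\<beta>/2) * (t powr (\<beta>/2) * v t) = v t"
        by (simp add: mult.assoc[symmetric] powr_add[symmetric])
      then show ?thesis using True v0 unfolding f_def g_def
        by (simp add: ennreal_mult[symmetric])
    qed (simp add: f_def g_def)
  qed
  also have "(\<integral>\<^sup>+t. f t ^ 2 \<partial>lborel) = (\<integral>\<^sup>+t. indicator {0<..<x} t * ennreal (t powr (-\<beta>)) \<partial>lborel)"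
  proof (intro nn_integral_cong)
    fix t :: real
    show "f t ^ 2 = indicator {0<..<x} t * ennreal (t powr (-\<beta>))"
    proof (cases "t \<in> {0<..<x}")
      case True
      then have "(t powr (-\<beta>/2))^2 = t powr (-\<beta>)"
        by (simp add: power2_eq_square powr_add[symmetric])
      then show ?thesis using True unfolding f_def
        by (simp add: ennreal_power)
    qed (simp add: f_def)
  qed
  also have "\<dots> = ennreal (x powr (1-\<beta>)/(1-\<beta>))"
    using nn_powr_0[of "-\<beta>" x] b x by simp
  also have "(\<integral>\<^sup>+t. g t ^ 2 \<partial>lborel) = (\<integral>\<^sup>+t. indicator {0<..<x} t * ennreal (t powr \<beta> * (v t)^2) \<partial>lborel)"
  proof (intro nn_integral_cong)
    fix t :: real
    show "g t ^ 2 = indicator {0<..<x} t * ennreal (t powr \<beta> * (v t)^2)"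
    proof (cases "t \<in> {0<..<x}")
      case True
      then have "(t powr (\<beta>/2) * v t)^2 = t powr \<beta> * (v t)^2"
        by (simp add: power2_eq_square powr_add[symmetric] algebra_simps)
      then show ?thesis using True v0 unfolding g_def
        by (simp add: ennreal_power)
    qed (simp add: g_def)
  qed
  finally show ?thesis .
qed

lemma hardy_core:
  fixes u v :: "real \<Rightarrow> real" and a :: real and k :: nat
  assumes a: "0 < a" and vm[measurable]: "v \<in> borel_measurable borel" and v0: "\<And>t. 0 \<le> v t"
    and u0: "\<And>x. 0 \<le> u x"
    and uv: "\<And>x. 0 < x \<Longrightarrow> x < a \<Longrightarrow> ennreal (u x) \<le> (\<integral>\<^sup>+t. indicator {0<..<x} t * ennreal (v t) \<partial>lborel)"
  shows "(\<integral>\<^sup>+x. indicator {0<..<a} x * ennreal ((u x)^2 * x powr (-(2*k+2))) \<partial>lborel)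
    + ennreal (a powr (-(k+1/2)) / (k+1/2)^2) * (\<integral>\<^sup>+t. indicator {0<..<a} t * ennreal (t powr (1/2 - k) * (v t)^2) \<partial>lborel)
    \<le> ennreal (1/(k+1/2)^2) * (\<integral>\<^sup>+t. indicator {0<..<a} t * ennreal ((v t)^2 * t powr (-2*k)) \<partial>lborel)"
proof -
  define \<beta> :: real where "\<beta> = 1/2 - k"
  define e :: real where "e = k + 3/2"
  define h where "h t = ennreal (t powr \<beta> * (v t)^2)" for t
  define B where "B x = (\<integral>\<^sup>+t. indicator {0<..<x} t * h t \<partial>lborel)" for x
  have hm[measurable]: "h \<in> borel_measurable borel" unfolding h_def by measurable
  have P: "indicator {0<..<a} x * ennreal ((u x)^2 * x powr (-(2*k+2))) \<le>
       indicator {0<..<a} x * (ennreal (x powr (-e) / (k+1/2)) * B x)" for x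
  proof (cases "x \<in> {0<..<a}")
    case True
    then have x: "0 < x" "x < a" by auto
    have "ennreal (u x)^2 \<le> (\<integral>\<^sup>+t. indicator {0<..<x} t * ennreal (v t) \<partial>lborel)^2"
      by (rule power_mono[OF uv[OF x]]) simp
    also have "\<dots> \<le> ennreal (x powr (1-\<beta>)/(1-\<beta>)) * B x"
      unfolding B_def h_def by (rule cs_step) (use v0 x in \<open>auto simp: \<beta>_def\<close>)
    finally have 1: "ennreal (u x)^2 \<le> ennreal (x powr (1-\<beta>)/(1-\<beta>)) * B x" .
    have "ennreal ((u x)^2 * x powr (-(2*k+2))) = ennreal (x powr (-(2*k+2))) * ennreal (u x)^2"
      using u0 by (simp add: ennreal_mult ennreal_power mult.commute)
    also have "\<dots> \<le> ennreal (x powr (-(2*k+2))) * (ennreal (x powr (1-\<beta>)/(1-\<beta>)) * B x)"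
      by (rule mult_left_mono[OF 1]) simp
    also have "\<dots> = ennreal (x powr (-(2*k+2)) * (x powr (1-\<beta>)/(1-\<beta>))) * B x"
      using x by (simp add: ennreal_mult[symmetric] \<beta>_def mult.assoc[symmetric] times_divide_eq_right)
    also have "x powr (-(2*k+2)) * (x powr (1-\<beta>)/(1-\<beta>)) = x powr (-e) / (k+1/2)"
    proof -
      have "-(2*real k+2) + (1-\<beta>) = -e" by (simp add: \<beta>_def e_def)
      then show ?thesis using x by (simp add: powr_add[symmetric] \<beta>_def)
    qed
    finally show ?thesis using True by simp
  qed simp
  have "(\<integral>\<^sup>+x. indicator {0<..<a} x * ennreal ((u x)^2 * x powr (-(2*k+2))) \<partial>lborel)
      \<le> (\<integral>\<^sup>+x. indicator {0<..<a} x * (ennreal (x powr (-e) / (k+1/2)) * B x) \<partial>lborel)"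
    by (rule nn_integral_mono) (rule P)
  also have "\<dots> = (\<integral>\<^sup>+x. \<integral>\<^sup>+t. indicator {0<..<a} x * ennreal (x powr (-e) / (k+1/2)) * (indicator {0<..<x} t * h t) \<partial>lborel \<partial>lborel)"
    unfolding B_def by (intro nn_integral_cong) (simp add: nn_integral_cmult mult.assoc)
  also have "\<dots> = (\<integral>\<^sup>+x. \<integral>\<^sup>+t. (if 0 < t \<and> t < x \<and> x < a then ennreal (x powr (-e) / (k+1/2)) * h t else 0) \<partial>lborel \<partial>lborel)"
    by (intro nn_integral_cong) (auto simp: indicator_def)
  also have "\<dots> = (\<integral>\<^sup>+t. \<integral>\<^sup>+x. (if 0 < t \<and> t < x \<and> x < a then ennreal (x powr (-e) / (k+1/2)) * h t else 0) \<partial>lborel \<partial>lborel)"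
    by (subst lborel_pair.Fubini') (auto simp: case_prod_unfold cong: measurable_cong_sets)
  also have "\<dots> = (\<integral>\<^sup>+t. indicator {0<..<a} t * h t * (\<integral>\<^sup>+x. indicator {t<..<a} x * ennreal (x powr (-e) / (k+1/2)) \<partial>lborel) \<partial>lborel)"
  proof (intro nn_integral_cong)
    fix t :: real
    have "(\<integral>\<^sup>+x. (if 0 < t \<and> t < x \<and> x < a then ennreal (x powr (-e) / (k+1/2)) * h t else 0) \<partial>lborel)
       = (\<integral>\<^sup>+x. (indicator {0<..<a} t * h t) * (indicator {t<..<a} x * ennreal (x powr (-e) / (k+1/2))) \<partial>lborel)"
      by (intro nn_integral_cong) (auto simp: indicator_def mult.commute)
    also have "\<dots> = indicator {0<..<a} t * h t * (\<integral>\<^sup>+x. indicator {t<..<a} x * ennreal (x powr (-e) / (k+1/2)) \<partial>lborel)"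
      by (rule nn_integral_cmult) measurable
    finally show "(\<integral>\<^sup>+x. (if 0 < t \<and> t < x \<and> x < a then ennreal (x powr (-e) / (k+1/2)) * h t else 0) \<partial>lborel)
       = indicator {0<..<a} t * h t * (\<integral>\<^sup>+x. indicator {t<..<a} x * ennreal (x powr (-e) / (k+1/2)) \<partial>lborel)" .
  qed
  also have "\<dots> = (\<integral>\<^sup>+t. indicator {0<..<a} t * h t * ennreal ((t powr (-(k+1/2)) - a powr (-(k+1/2)))/(k+1/2)^2) \<partial>lborel)"
  proof (intro nn_integral_cong)
    fix t :: real
    show "indicator {0<..<a} t * h t * (\<integral>\<^sup>+x. indicator {t<..<a} x * ennreal (x powr (-e) / (k+1/2)) \<partial>lborel)
       = indicator {0<..<a} t * h t * ennreal ((t powr (-(k+1/2)) - a powr (-(k+1/2)))/(k+1/2)^2)"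
    proof (cases "t \<in> {0<..<a}")
      case True
      have "(\<integral>\<^sup>+x. indicator {t<..<a} x * ennreal (x powr (-e) / (k+1/2)) \<partial>lborel)
          = (\<integral>\<^sup>+x. ennreal (1/(k+1/2)) * (indicator {t<..<a} x * ennreal (x powr (-e))) \<partial>lborel)"
      proof (intro nn_integral_cong)
        fix x :: real
        have "ennreal (x powr (-e) / (k+1/2)) = ennreal (1/(k+1/2)) * ennreal (x powr (-e))"
          by (subst ennreal_mult[symmetric]) auto
        then show "indicator {t<..<a} x * ennreal (x powr (-e) / (k+1/2)) = ennreal (1/(k+1/2)) * (indicator {t<..<a} x * ennreal (x powr (-e)))"
          by (simp add: mult.left_commute)
      qed
      also have "\<dots> = ennreal (1/(k+1/2)) * ennreal ((t powr (1-e) - a powr (1-e))/(e-1))"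
        using True nn_powr_tail[of e t a] by (subst nn_integral_cmult) (auto simp: e_def)
      also have "\<dots> = ennreal ((t powr (-(k+1/2)) - a powr (-(k+1/2)))/(k+1/2)^2)"
      proof -
        have e1: "1 - e = -(k+1/2)" "e - 1 = k + 1/2" by (auto simp: e_def)
        have "t powr (-(k+1/2)) \<ge> a powr (-(k+1/2))" using True by (intro powr_mono2') auto
        then show ?thesis unfolding e1
          by (subst ennreal_mult[symmetric]) (auto simp: power2_eq_square)
      qed
      finally show ?thesis by simp
    qed simp
  qed
  finally have X: "(\<integral>\<^sup>+x. indicator {0<..<a} x * ennreal ((u x)^2 * x powr (-(2*k+2))) \<partial>lborel)
     \<le> (\<integral>\<^sup>+t. indicator {0<..<a} t * h t * ennreal ((t powr (-(k+1/2)) - a powr (-(k+1/2)))/(k+1/2)^2) \<partial>lborel)" .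
  have "(\<integral>\<^sup>+t. indicator {0<..<a} t * h t * ennreal ((t powr (-(k+1/2)) - a powr (-(k+1/2)))/(k+1/2)^2) \<partial>lborel)
    + ennreal (a powr (-(k+1/2)) / (k+1/2)^2) * (\<integral>\<^sup>+t. indicator {0<..<a} t * ennreal (t powr (1/2 - k) * (v t)^2) \<partial>lborel)
    = (\<integral>\<^sup>+t. indicator {0<..<a} t * h t * ennreal ((t powr (-(k+1/2)) - a powr (-(k+1/2)))/(k+1/2)^2)
         + ennreal (a powr (-(k+1/2)) / (k+1/2)^2) * (indicator {0<..<a} t * h t) \<partial>lborel)"
    by (subst nn_integral_add) (auto simp: nn_integral_cmult h_def \<beta>_def)
  also have "\<dots> = (\<integral>\<^sup>+t. ennreal (1/(k+1/2)^2) * (indicator {0<..<a} t * ennreal ((v t)^2 * t powr (-2*k))) \<partial>lborel)"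
  proof (intro nn_integral_cong)
    fix t :: real
    show "indicator {0<..<a} t * h t * ennreal ((t powr (-(k+1/2)) - a powr (-(k+1/2)))/(k+1/2)^2)
         + ennreal (a powr (-(k+1/2)) / (k+1/2)^2) * (indicator {0<..<a} t * h t)
       = ennreal (1/(k+1/2)^2) * (indicator {0<..<a} t * ennreal ((v t)^2 * t powr (-2*k)))"
    proof (cases "t \<in> {0<..<a}")
      case True
      have ge: "t powr (-(k+1/2)) \<ge> a powr (-(k+1/2))" using True by (intro powr_mono2') auto
      have "h t * ennreal ((t powr (-(k+1/2)) - a powr (-(k+1/2)))/(k+1/2)^2)
         + ennreal (a powr (-(k+1/2)) / (k+1/2)^2) * h t
         = h t * (ennreal ((t powr (-(k+1/2)) - a powr (-(k+1/2)))/(k+1/2)^2) + ennreal (a powr (-(k+1/2)) / (k+1/2)^2))"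
        by (simp add: algebra_simps)
      also have "ennreal ((t powr (-(k+1/2)) - a powr (-(k+1/2)))/(k+1/2)^2) + ennreal (a powr (-(k+1/2)) / (k+1/2)^2)
          = ennreal (t powr (-(k+1/2)) / (k+1/2)^2)"
        using ge by (subst ennreal_plus[symmetric]) (auto simp: diff_divide_distrib intro!: divide_right_mono)
      also have "h t * ennreal (t powr (-(k+1/2)) / (k+1/2)^2) = ennreal (1/(k+1/2)^2) * ennreal ((v t)^2 * t powr (-2*k))"
      proof -
        have "t powr \<beta> * (v t)^2 * (t powr (-(k+1/2)) / (k+1/2)^2) = 1/(k+1/2)^2 * ((v t)^2 * t powr (-2*k))"
          using True by (simp add: \<beta>_def field_simps powr_add[symmetric])
        then show ?thesis unfolding h_def
          by (subst ennreal_mult[symmetric], simp, simp)+ simp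
      qed
      finally show ?thesis using True by simp
    qed simp
  qed
  also have "\<dots> = ennreal (1/(k+1/2)^2) * (\<integral>\<^sup>+t. indicator {0<..<a} t * ennreal ((v t)^2 * t powr (-2*k)) \<partial>lborel)"
    by (rule nn_integral_cmult) measurable
  finally have Y: "(\<integral>\<^sup>+t. indicator {0<..<a} t * h t * ennreal ((t powr (-(k+1/2)) - a powr (-(k+1/2)))/(k+1/2)^2) \<partial>lborel)
    + ennreal (a powr (-(k+1/2)) / (k+1/2)^2) * (\<integral>\<^sup>+t. indicator {0<..<a} t * ennreal (t powr (1/2 - k) * (v t)^2) \<partial>lborel)
    = ennreal (1/(k+1/2)^2) * (\<integral>\<^sup>+t. indicator {0<..<a} t * ennreal ((v t)^2 * t powr (-2*k)) \<partial>lborel)" .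
  show ?thesis by (rule order_trans[OF add_mono[OF X order_refl]]) (simp only: Y)
qed

lemma hardy_leb:
  fixes u v :: "real \<Rightarrow> real" and a :: real and k :: nat
  assumes a: "0 < a" and vm: "v \<in> borel_measurable lebesgue" and v0: "\<And>t. 0 \<le> v t"
    and u0: "\<And>x. 0 \<le> u x"
    and uv: "\<And>x. 0 < x \<Longrightarrow> x < a \<Longrightarrow> ennreal (u x) \<le> (\<integral>\<^sup>+t. indicator {0<..<x} t * ennreal (v t) \<partial>lborel)"
  shows "(\<integral>\<^sup>+x. indicator {0<..<a} x * ennreal ((u x)^2 * x powr (-(2*k+2))) \<partial>lborel)
    + ennreal (a powr (-(k+1/2)) / (k+1/2)^2) * (\<integral>\<^sup>+t. indicator {0<..<a} t * ennreal (t powr (1/2 - k) * (v t)^2) \<partial>lborel)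
    \<le> ennreal (1/(k+1/2)^2) * (\<integral>\<^sup>+t. indicator {0<..<a} t * ennreal ((v t)^2 * t powr (-2*k)) \<partial>lborel)"
proof -
  obtain v' where v'm: "v' \<in> borel_measurable lborel" and ae: "AE x in lborel. v x = v' x"
    using completion_ex_borel_measurable_real[OF vm] by blast
  define w where "w x = \<bar>v' x\<bar>" for x
  have wm[measurable]: "w \<in> borel_measurable borel" using v'm unfolding w_def by simp
  have ae2: "AE x in lborel. v x = w x" using ae by eventually_elim (metis abs_of_nonneg v0 w_def)
  have "(\<integral>\<^sup>+x. indicator {0<..<a} x * ennreal ((u x)^2 * x powr (-(2*k+2))) \<partial>lborel)
    + ennreal (a powr (-(k+1/2)) / (k+1/2)^2) * (\<integral>\<^sup>+t. indicator {0<..<a} t * ennreal (t powr (1/2 - k) * (w t)^2) \<partial>lborel)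
    \<le> ennreal (1/(k+1/2)^2) * (\<integral>\<^sup>+t. indicator {0<..<a} t * ennreal ((w t)^2 * t powr (-2*k)) \<partial>lborel)"
  proof (rule hardy_core[OF a wm _ u0])
    show "0 \<le> w t" for t by (simp add: w_def)
    fix x assume x: "0 < x" "x < a"
    have "(\<integral>\<^sup>+t. indicator {0<..<x} t * ennreal (v t) \<partial>lborel) = (\<integral>\<^sup>+t. indicator {0<..<x} t * ennreal (w t) \<partial>lborel)"
      by (intro nn_integral_cong_AE) (use ae2 in eventually_elim, simp)
    then show "ennreal (u x) \<le> (\<integral>\<^sup>+t. indicator {0<..<x} t * ennreal (w t) \<partial>lborel)"
      using uv[OF x] by simp
  qed
  moreover have "(\<integral>\<^sup>+t. indicator {0<..<a} t * ennreal (t powr (1/2 - k) * (w t)^2) \<partial>lborel)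
     = (\<integral>\<^sup>+t. indicator {0<..<a} t * ennreal (t powr (1/2 - k) * (v t)^2) \<partial>lborel)"
    by (intro nn_integral_cong_AE) (use ae2 in eventually_elim, simp)
  moreover have "(\<integral>\<^sup>+t. indicator {0<..<a} t * ennreal ((w t)^2 * t powr (-2*k)) \<partial>lborel)
     = (\<integral>\<^sup>+t. indicator {0<..<a} t * ennreal ((v t)^2 * t powr (-2*k)) \<partial>lborel)"
    by (intro nn_integral_cong_AE) (use ae2 in eventually_elim, simp)
  ultimately show ?thesis by simp
qed

lemma hardy_chain:
  fixes w :: "nat \<Rightarrow> real \<Rightarrow> real" and a :: real and n :: nat
  assumes a: "0 < a"
   and wm: "\<And>j. 1 \<le> j \<Longrightarrow> j \<le> n \<Longrightarrow> w j \<in> borel_measurable lebesgue"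
   and w0: "\<And>j t. 0 \<le> w j t"
   and hyp: "\<And>j x. j < n \<Longrightarrow> 0 < x \<Longrightarrow> x < a \<Longrightarrow> ennreal (w j x) \<le> (\<integral>\<^sup>+t. indicator {0<..<x} t * ennreal (w (Suc j) t) \<partial>lborel)"
   and m: "m \<le> n"
  shows "(\<integral>\<^sup>+x. indicator {0<..<a} x * ennreal ((w (n-m) x)^2 * x powr (-(2*real m))) \<partial>lborel)
     \<le> ennreal (\<Prod>k<m. 1/(real k+1/2)^2) * (\<integral>\<^sup>+x. indicator {0<..<a} x * ennreal ((w n x)^2 * x powr 0) \<partial>lborel)"
  using m
proof (induction m)
  case 0
  then show ?case by simp
next
  case (Suc m)
  have m: "m < n" using Suc by simp
  have st: "(\<integral>\<^sup>+x. indicator {0<..<a} x * ennreal ((w (n - Suc m) x)^2 * x powr (-(2*m+2))) \<partial>lborel)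
    + ennreal (a powr (-(m+1/2)) / (m+1/2)^2) * (\<integral>\<^sup>+t. indicator {0<..<a} t * ennreal (t powr (1/2 - m) * (w (Suc (n - Suc m)) t)^2) \<partial>lborel)
    \<le> ennreal (1/(m+1/2)^2) * (\<integral>\<^sup>+t. indicator {0<..<a} t * ennreal ((w (Suc (n - Suc m)) t)^2 * t powr (-2*m)) \<partial>lborel)"
    by (rule hardy_leb[where v="w (Suc (n - Suc m))" and u="w (n - Suc m)", OF a wm w0 w0 hyp]) (use m in auto)
  have e1: "Suc (n - Suc m) = n - m" using m by simp
  have "(\<integral>\<^sup>+x. indicator {0<..<a} x * ennreal ((w (n - Suc m) x)^2 * x powr (-(2*real (Suc m)))) \<partial>lborel)
      = (\<integral>\<^sup>+x. indicator {0<..<a} x * ennreal ((w (n - Suc m) x)^2 * x powr (-(2*m+2))) \<partial>lborel)"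
    by (simp add: algebra_simps)
  also have "\<dots> \<le> ennreal (1/(m+1/2)^2) * (\<integral>\<^sup>+t. indicator {0<..<a} t * ennreal ((w (n-m) t)^2 * t powr (-2*m)) \<partial>lborel)"
    using st unfolding e1 by (rule order_trans[rotated]) simp
  also have "\<dots> = ennreal (1/(m+1/2)^2) * (\<integral>\<^sup>+t. indicator {0<..<a} t * ennreal ((w (n-m) t)^2 * t powr (-(2*real m))) \<partial>lborel)"
    by simp
  also have "\<dots> \<le> ennreal (1/(m+1/2)^2) * (ennreal (\<Prod>k<m. 1/(real k+1/2)^2) * (\<integral>\<^sup>+x. indicator {0<..<a} x * ennreal ((w n x)^2 * x powr 0) \<partial>lborel))"
    by (rule mult_left_mono[OF Suc.IH]) (use Suc in auto)
  also have "\<dots> = ennreal (\<Prod>k<Suc m. 1/(real k+1/2)^2) * (\<integral>\<^sup>+x. indicator {0<..<a} x * ennreal ((w n x)^2 * x powr 0) \<partial>lborel)"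
  proof -
    have pp: "ennreal (1/(real m+1/2)^2) * ennreal (\<Prod>k<m. 1/(real k+1/2)^2) = ennreal (\<Prod>k<Suc m. 1/(real k+1/2)^2)"
      by (subst ennreal_mult[symmetric]) (auto simp: prod_nonneg mult.commute)
    show ?thesis by (simp only: mult.assoc[symmetric] pp)
  qed
  finally show ?case .
qed

lemma hardy_chain_strict:
  fixes w :: "nat \<Rightarrow> real \<Rightarrow> real" and a :: real and n :: nat
  assumes a: "0 < a" and n: "1 \<le> n"
   and wm: "\<And>j. 1 \<le> j \<Longrightarrow> j \<le> n \<Longrightarrow> w j \<in> borel_measurable lebesgue"
   and w0: "\<And>j t. 0 \<le> w j t"
   and hyp: "\<And>j x. j < n \<Longrightarrow> 0 < x \<Longrightarrow> x < a \<Longrightarrow> ennreal (w j x) \<le> (\<integral>\<^sup>+t. indicator {0<..<x} t * ennreal (w (Suc j) t) \<partial>lborel)"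
  shows "(\<integral>\<^sup>+x. indicator {0<..<a} x * ennreal ((w 0 x)^2 * x powr (-(2*real n))) \<partial>lborel)
     + ennreal (a powr (-(real (n-1)+1/2)) / (real (n-1)+1/2)^2) * (\<integral>\<^sup>+t. indicator {0<..<a} t * ennreal (t powr (1/2 - real (n-1)) * (w 1 t)^2) \<partial>lborel)
     \<le> ennreal (\<Prod>k<n. 1/(real k+1/2)^2) * (\<integral>\<^sup>+x. indicator {0<..<a} x * ennreal ((w n x)^2 * x powr 0) \<partial>lborel)"
proof -
  define m where "m = n - 1"
  have nm: "n = Suc m" using n by (simp add: m_def)
  have st: "(\<integral>\<^sup>+x. indicator {0<..<a} x * ennreal ((w (n - Suc m) x)^2 * x powr (-(2*m+2))) \<partial>lborel)
    + ennreal (a powr (-(m+1/2)) / (m+1/2)^2) * (\<integral>\<^sup>+t. indicator {0<..<a} t * ennreal (t powr (1/2 - m) * (w (Suc (n - Suc m)) t)^2) \<partial>lborel)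
    \<le> ennreal (1/(m+1/2)^2) * (\<integral>\<^sup>+t. indicator {0<..<a} t * ennreal ((w (Suc (n - Suc m)) t)^2 * t powr (-2*m)) \<partial>lborel)"
    by (rule hardy_leb[where v="w (Suc (n - Suc m))" and u="w (n - Suc m)", OF a wm w0 w0 hyp]) (use nm in auto)
  have ch: "(\<integral>\<^sup>+x. indicator {0<..<a} x * ennreal ((w (n-m) x)^2 * x powr (-(2*real m))) \<partial>lborel)
     \<le> ennreal (\<Prod>k<m. 1/(real k+1/2)^2) * (\<integral>\<^sup>+x. indicator {0<..<a} x * ennreal ((w n x)^2 * x powr 0) \<partial>lborel)"
    by (rule hardy_chain[where w=w and n=n and a=a, OF a wm w0 hyp]) (use nm in auto)
  have "(\<integral>\<^sup>+x. indicator {0<..<a} x * ennreal ((w 0 x)^2 * x powr (-(2*real n))) \<partial>lborel)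
     + ennreal (a powr (-(real (n-1)+1/2)) / (real (n-1)+1/2)^2) * (\<integral>\<^sup>+t. indicator {0<..<a} t * ennreal (t powr (1/2 - real (n-1)) * (w 1 t)^2) \<partial>lborel)
    = (\<integral>\<^sup>+x. indicator {0<..<a} x * ennreal ((w (n - Suc m) x)^2 * x powr (-(2*m+2))) \<partial>lborel)
    + ennreal (a powr (-(m+1/2)) / (m+1/2)^2) * (\<integral>\<^sup>+t. indicator {0<..<a} t * ennreal (t powr (1/2 - m) * (w (Suc (n - Suc m)) t)^2) \<partial>lborel)"
    by (simp add: nm algebra_simps)
  also have "\<dots> \<le> ennreal (1/(m+1/2)^2) * (\<integral>\<^sup>+t. indicator {0<..<a} t * ennreal ((w (n-m) t)^2 * t powr (-(2*real m))) \<partial>lborel)"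
    using st by (simp add: nm)
  also have "\<dots> \<le> ennreal (1/(m+1/2)^2) * (ennreal (\<Prod>k<m. 1/(real k+1/2)^2) * (\<integral>\<^sup>+x. indicator {0<..<a} x * ennreal ((w n x)^2 * x powr 0) \<partial>lborel))"
    by (rule mult_left_mono[OF ch]) simp
  also have "\<dots> = ennreal (\<Prod>k<n. 1/(real k+1/2)^2) * (\<integral>\<^sup>+x. indicator {0<..<a} x * ennreal ((w n x)^2 * x powr 0) \<partial>lborel)"
  proof -
    have pp: "ennreal (1/(real m+1/2)^2) * ennreal (\<Prod>k<m. 1/(real k+1/2)^2) = ennreal (\<Prod>k<Suc m. 1/(real k+1/2)^2)"
      by (subst ennreal_mult[symmetric]) (auto simp: prod_nonneg mult.commute)
    show ?thesis unfolding nm by (simp only: mult.assoc[symmetric] pp)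
  qed
  finally show ?thesis .
qed

lemma ind_point_eq: "(\<lambda>x. indicator {s} x *\<^sub>R f x) = (\<lambda>x::real. indicator {s} x *\<^sub>R (f s :: 'a::real_vector))"
  by (rule ext) (auto simp: indicator_def)
lemma si_point:
  fixes f :: "real \<Rightarrow> 'a::{banach, second_countable_topology}"
  shows "set_integrable lebesgue {s} f"
  unfolding set_integrable_def
  apply (subst ind_point_eq)
  by (rule integrable_indicator) (use emeasure_lborel_singleton[of s] in \<open>simp_all add: emeasure_completion\<close>)
lemma LINT_point:
  fixes f :: "real \<Rightarrow> 'a::{banach, second_countable_topology}"
  shows "(LINT t:{s}|lebesgue. f t) = 0"
  unfolding set_lebesgue_integral_def
  apply (subst ind_point_eq)
  using emeasure_lborel_singleton[of s] by (simp add: emeasure_completion measure_def)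


lemma Icc_Ioo:
  fixes h :: "real \<Rightarrow> 'a::{banach, second_countable_topology}"
  assumes h: "set_integrable lebesgue {0<..<b} h" and y: "0 \<le> y" "y \<le> b"
  shows "set_integrable lebesgue {0..y} h" "(LINT t:{0..y}|lebesgue. h t) = (LINT t:{0<..<y}|lebesgue. h t)"
proof -
  have i1: "set_integrable lebesgue {0<..<y} h" by (rule set_integrable_subset[OF h]) (use y in auto)
  have i2: "set_integrable lebesgue ({0<..<y} \<union> {0}) h" by (rule set_integrable_Un[OF i1 si_point]) auto
  have i3: "set_integrable lebesgue ({0<..<y} \<union> {0} \<union> {y}) h" by (rule set_integrable_Un[OF i2 si_point]) auto
  have eq: "{0..y} = {0<..<y} \<union> {0} \<union> {y}" using y by auto
  show "set_integrable lebesgue {0..y} h" using i3 eq by simp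
  show "(LINT t:{0..y}|lebesgue. h t) = (LINT t:{0<..<y}|lebesgue. h t)"
  proof (cases "y = 0")
    case True
    then show ?thesis using LINT_point[of 0 h] by (simp add: set_lebesgue_integral_def)
  next
    case False
    have "(LINT t:{0<..<y} \<union> {0} \<union> {y}|lebesgue. h t) = (LINT t:{0<..<y} \<union> {0}|lebesgue. h t) + (LINT t:{y}|lebesgue. h t)"
      by (rule set_integral_Un[OF _ i2 si_point]) (use False y in auto)
    also have "(LINT t:{0<..<y} \<union> {0}|lebesgue. h t) = (LINT t:{0<..<y}|lebesgue. h t) + (LINT t:{0}|lebesgue. h t)"
      by (rule set_integral_Un[OF _ i1 si_point]) auto
    finally show ?thesis using eq by (simp add: LINT_point)
  qed
qed

lemma LINT_norm_le:
  fixes h :: "real \<Rightarrow> 'a::{banach, second_countable_topology}"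
  assumes h: "set_integrable lebesgue S h"
  shows "ennreal (norm (LINT t:S|lebesgue. h t)) \<le> (\<integral>\<^sup>+t. indicator S t * ennreal (norm (h t)) \<partial>lborel)"
proof -
  have "norm (LINT t:S|lebesgue. h t) \<le> (LINT t:S|lebesgue. norm (h t))"
    by (rule set_integral_norm_bound[OF h])
  also have "(LINT t:S|lebesgue. norm (h t)) = (LINT t|lebesgue. norm (indicator S t *\<^sub>R h t))"
    unfolding set_lebesgue_integral_def by (intro Bochner_Integration.integral_cong) (auto simp: indicator_def)
  finally have 1: "ennreal (norm (LINT t:S|lebesgue. h t)) \<le> ennreal (LINT t|lebesgue. norm (indicator S t *\<^sub>R h t))"
    by (rule ennreal_leI)
  have int: "integrable lebesgue (\<lambda>t. norm (indicator S t *\<^sub>R h t))"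
    using h unfolding set_integrable_def by (rule integrable_norm)
  have "ennreal (LINT t|lebesgue. norm (indicator S t *\<^sub>R h t)) = (\<integral>\<^sup>+t. ennreal (norm (indicator S t *\<^sub>R h t)) \<partial>lebesgue)"
    by (rule nn_integral_eq_integral[OF int, symmetric]) auto
  also have "\<dots> = (\<integral>\<^sup>+t. indicator S t * ennreal (norm (h t)) \<partial>lborel)"
    by (simp add: nn_integral_completion) (intro nn_integral_cong, auto simp: indicator_def)
  finally show ?thesis using 1 by simp
qed



lemma borel_to_leb: "f \<in> borel_measurable borel \<Longrightarrow> f \<in> borel_measurable lebesgue"
  by (rule measurable_completion) simp

lemma cont_G:
  fixes H :: "real \<Rightarrow> 'a::{banach, second_countable_topology}"
  assumes H: "integrable lebesgue H"
  shows "continuous_on UNIV (\<lambda>y. LINT t|lebesgue. indicator {0<..<y} t *\<^sub>R H t)"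
proof -
  have Hm: "H \<in> borel_measurable lebesgue" using H by (rule borel_measurable_integrable)
  have "isCont (\<lambda>y. LINT t|lebesgue. indicator {0<..<y} t *\<^sub>R H t) y" for y
    unfolding continuous_at_sequentially comp_def
  proof (intro allI impI)
    fix X :: "nat \<Rightarrow> real" assume X: "X \<longlonglongrightarrow> y"
    show "(\<lambda>i. LINT t|lebesgue. indicator {0<..<X i} t *\<^sub>R H t) \<longlonglongrightarrow> (LINT t|lebesgue. indicator {0<..<y} t *\<^sub>R H t)"
    proof (rule integral_dominated_convergence[where w = "\<lambda>t. norm (H t)"])
      show "(\<lambda>t. indicator {0<..<y} t *\<^sub>R H t) \<in> borel_measurable lebesgue"
        by (intro borel_measurable_scaleR borel_measurable_indicator Hm) auto
      show "(\<lambda>t. indicator {0<..<X i} t *\<^sub>R H t) \<in> borel_measurable lebesgue" for i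
        by (intro borel_measurable_scaleR borel_measurable_indicator Hm) auto
      show "integrable lebesgue (\<lambda>t. norm (H t))" using H by (rule integrable_norm)
      show "AE t in lebesgue. norm (indicator {0<..<X i} t *\<^sub>R H t) \<le> norm (H t)" for i
        by (auto simp: indicator_def)
      have ae: "AE t in lebesgue. t \<noteq> y \<and> t \<noteq> 0"
        by (intro AE_completion AE_conjI AE_lborel_singleton)
      show "AE t in lebesgue. (\<lambda>i. indicator {0<..<X i} t *\<^sub>R H t) \<longlonglongrightarrow> indicator {0<..<y} t *\<^sub>R H t"
        using ae
      proof eventually_elim
        case (elim t)
        show ?case
        proof (rule tendsto_eventually)
          consider "t < 0" | "0 < t" "t < y" | "y < t" "0 < t" using elim by linarith
          then show "\<forall>\<^sub>F i in sequentially. indicator {0<..<X i} t *\<^sub>R H t = indicator {0<..<y} t *\<^sub>R H t"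
          proof cases
            case 1 then show ?thesis by (auto simp: indicator_def)
          next
            case 2
            have "\<forall>\<^sub>F i in sequentially. t < X i" using order_tendstoD(1)[OF X 2(2)] .
            then show ?thesis by eventually_elim (use 2 in \<open>auto simp: indicator_def\<close>)
          next
            case 3
            have "\<forall>\<^sub>F i in sequentially. X i < t" using order_tendstoD(2)[OF X 3(1)] .
            then show ?thesis by eventually_elim (use 3 in \<open>auto simp: indicator_def\<close>)
          qed
        qed
      qed
    qed
  qed
  then show ?thesis by (simp add: continuous_at_imp_continuous_on)
qed

lemma AC_repr:
  fixes h h' :: "real \<Rightarrow> 'a::{banach, second_countable_topology}"
  assumes ac: "AC_with_deriv b h h'" and y: "0 \<le> y" "y \<le> b"
  shows "h y = h 0 + (LINT t:{0<..<y}|lebesgue. h' t)"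
proof -
  have i: "set_integrable lebesgue {0<..<b} h'" using ac by (simp add: AC_with_deriv_def)
  have "\<forall>x\<in>{0..b}. h x = h 0 + (LINT t:{0..x}|lebesgue. h' t)" using ac unfolding AC_with_deriv_def by (elim conjE)
  moreover have "y \<in> {0..b}" using y by simp
  ultimately have "h y = h 0 + (LINT t:{0..y}|lebesgue. h' t)" by (rule bspec)
  then show ?thesis using Icc_Ioo(2)[OF i y] by simp
qed

lemma AC_meas:
  fixes h h' :: "real \<Rightarrow> 'a::{banach, second_countable_topology}"
  assumes ac: "AC_with_deriv b h h'"
  shows "set_borel_measurable lebesgue {0<..<b} h"
proof -
  have i: "set_integrable lebesgue {0<..<b} h'" using ac by (simp add: AC_with_deriv_def)
  define H where "H t = indicator {0<..<b} t *\<^sub>R h' t" for t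
  have Hi: "integrable lebesgue H" using i unfolding H_def set_integrable_def .
  define G where "G y = (LINT t|lebesgue. indicator {0<..<y} t *\<^sub>R H t)" for y
  have Gm: "G \<in> borel_measurable lebesgue"
    unfolding G_def by (intro borel_to_leb borel_measurable_continuous_onI cont_G Hi)
  have eq: "indicator {0<..<b} y *\<^sub>R h y = indicator {0<..<b} y *\<^sub>R (h 0 + G y)" for y
  proof (cases "y \<in> {0<..<b}")
    case True
    have "(LINT t:{0<..<y}|lebesgue. h' t) = G y"
      unfolding G_def H_def set_lebesgue_integral_def
      by (intro Bochner_Integration.integral_cong) (use True in \<open>auto simp: indicator_def\<close>)
    then show ?thesis using AC_repr[OF ac, of y] True by simp
  qed simp
  show ?thesis unfolding set_borel_measurable_def eq
    by (intro borel_measurable_scaleR borel_measurable_indicator borel_measurable_add Gm) auto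
qed

lemma AC_left:
  fixes h h' :: "real \<Rightarrow> 'a::{banach, second_countable_topology}"
  assumes ac: "AC_with_deriv b h h'" and h0: "h 0 = 0" and y: "0 < y" "y < b"
  shows "ennreal (norm (h y)) \<le> (\<integral>\<^sup>+t. indicator {0<..<y} t * ennreal (norm (h' t)) \<partial>lborel)"
proof -
  have i: "set_integrable lebesgue {0<..<b} h'" using ac by (simp add: AC_with_deriv_def)
  have iy: "set_integrable lebesgue {0<..<y} h'" by (rule set_integrable_subset[OF i]) (use y in auto)
  show ?thesis using AC_repr[OF ac, of y] y h0 LINT_norm_le[OF iy] by simp
qed

lemma AC_right:
  fixes h h' :: "real \<Rightarrow> 'a::{banach, second_countable_topology}"
  assumes ac: "AC_with_deriv b h h'" and hb: "h b = 0" and y: "0 < y" "y < b"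
  shows "ennreal (norm (h y)) \<le> (\<integral>\<^sup>+t. indicator {y<..<b} t * ennreal (norm (h' t)) \<partial>lborel)"
proof -
  have i: "set_integrable lebesgue {0<..<b} h'" using ac by (simp add: AC_with_deriv_def)
  have i1: "set_integrable lebesgue {0<..<y} h'" by (rule set_integrable_subset[OF i]) (use y in auto)
  have i2: "set_integrable lebesgue {y<..<b} h'" by (rule set_integrable_subset[OF i]) (use y in auto)
  have i12: "set_integrable lebesgue ({0<..<y} \<union> {y}) h'" by (rule set_integrable_Un[OF i1 si_point]) auto
  have eq: "{0<..<b} = ({0<..<y} \<union> {y}) \<union> {y<..<b}" using y by auto
  have "(LINT t:{0<..<b}|lebesgue. h' t) = (LINT t:({0<..<y} \<union> {y})|lebesgue. h' t) + (LINT t:{y<..<b}|lebesgue. h' t)"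
    unfolding eq by (rule set_integral_Un[OF _ i12 i2]) auto
  also have "(LINT t:({0<..<y} \<union> {y})|lebesgue. h' t) = (LINT t:{0<..<y}|lebesgue. h' t) + (LINT t:{y}|lebesgue. h' t)"
    by (rule set_integral_Un[OF _ i1 si_point]) auto
  finally have 1: "(LINT t:{0<..<b}|lebesgue. h' t) = (LINT t:{0<..<y}|lebesgue. h' t) + (LINT t:{y<..<b}|lebesgue. h' t)"
    by (simp add: LINT_point)
  have "h y = h b - (LINT t:{y<..<b}|lebesgue. h' t)"
    using AC_repr[OF ac, of y] AC_repr[OF ac, of b] y 1 by (simp add: algebra_simps)
  then have "norm (h y) = norm (LINT t:{y<..<b}|lebesgue. h' t)" using hb by simp
  then show ?thesis using LINT_norm_le[OF i2] by simp
qed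

lemma id_leb[measurable]: "(\<lambda>x::real. x) \<in> borel_measurable lebesgue"
  by (rule borel_to_leb) simp

lemma refl_map_meas: "(\<lambda>x::real. b - x) \<in> lebesgue \<rightarrow>\<^sub>M lebesgue"
proof -
  have "(\<lambda>x::real. b + (-1) * x) \<in> lebesgue \<rightarrow>\<^sub>M lebesgue"
    using lebesgue_affine_measurable[where c="\<lambda>_. -1::real" and t=b] by simp
  then show ?thesis by simp
qed

lemma refl_meas: "f \<in> borel_measurable lebesgue \<Longrightarrow> (\<lambda>x::real. f (b - x)) \<in> borel_measurable lebesgue"
  using measurable_compose[OF refl_map_meas] by blast

lemma refl_int:
  fixes F :: "real \<Rightarrow> ennreal"
  assumes "F \<in> borel_measurable lebesgue"
  shows "(\<integral>\<^sup>+x. F x \<partial>lborel) = (\<integral>\<^sup>+x. F (b - x) \<partial>lborel)"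
proof -
  have "(\<integral>\<^sup>+x. F x \<partial>lebesgue) = ennreal \<bar>-1\<bar> * (\<integral>\<^sup>+x. F (b + (-1) * x) \<partial>lebesgue)"
    by (rule nn_integral_real_affine_lebesgue[OF assms]) simp
  then show ?thesis by (simp add: nn_integral_completion)
qed

lemma ennreal_strict_aux:
  fixes x y z :: ennreal
  assumes "x + y \<le> z" "z < \<infinity>" "0 < y"
  shows "x < z"
proof (rule ccontr)
  assume "\<not> x < z"
  then have "z \<le> x" by simp
  then have "z + y \<le> z" using assms(1) by (meson add_right_mono order_trans)
  then show False using assms(2,3) by auto
qed

lemma odd_double_fact_prod: "real (odd_double_fact n) = (\<Prod>k<n. 2 * real k + 1)"
proof (induction n)
  case 0
  then show ?case by (simp add: odd_double_fact_def)
next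
  case (Suc n)
  have "odd_double_fact (Suc n) = odd_double_fact n * (2 * Suc n - 1)"
    unfolding odd_double_fact_def by (simp add: prod.nat_ivl_Suc')
  then show ?case using Suc by (simp add: of_nat_diff algebra_simps)
qed

lemma CP1: "(real (odd_double_fact n))\<^sup>2 / 2 ^ (2 * n) * (\<Prod>k<n. 1/(real k+1/2)^2) = 1"
proof -
  have "(\<Prod>k<n. 1/(real k+1/2)^2) = (\<Prod>k<n. 4/(2*real k+1)^2)"
    by (intro prod.cong) (auto simp: field_simps power2_eq_square)
  also have "\<dots> = 4^n / (\<Prod>k<n. 2*real k+1)^2"
    by (simp add: prod_dividef power_mult_distrib[symmetric] prod_power_distrib)
  finally show ?thesis
    by (simp add: odd_double_fact_prod power_mult prod_pos)
qed

lemma zero_int_aux: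
  fixes v :: "real \<Rightarrow> real" and e a :: real
  assumes vm[measurable]: "v \<in> borel_measurable lebesgue" and v0: "\<And>t. 0 \<le> v t"
    and z: "(\<integral>\<^sup>+t. indicator {0<..<a} t * ennreal (t powr e * (v t)^2) \<partial>lborel) = 0"
    and x: "x \<le> a"
  shows "(\<integral>\<^sup>+t. indicator {0<..<x} t * ennreal (v t) \<partial>lborel) = 0"
proof -
  have "(\<integral>\<^sup>+t. indicator {0<..<a} t * ennreal (t powr e * (v t)^2) \<partial>lebesgue) = 0"
    using z by (simp add: nn_integral_completion)
  then have ae: "AE t in lebesgue. indicator {0<..<a} t * ennreal (t powr e * (v t)^2) = 0"
    by (subst (asm) nn_integral_0_iff_AE) measurable
  have "AE t in lebesgue. indicator {0<..<x} t * ennreal (v t) = 0"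
    using ae
  proof eventually_elim
    case (elim t)
    show ?case
    proof (cases "t \<in> {0<..<x}")
      case True
      then have "t powr e * (v t)^2 \<le> 0" using elim x by (auto simp: indicator_def)
      moreover have "t powr e > 0" using True by simp
      ultimately have "(v t)^2 \<le> 0" by (simp add: mult_le_0_iff)
      then have "v t = 0" using v0[of t] by simp
      then show ?thesis by simp
    qed simp
  qed
  then have "(\<integral>\<^sup>+t. indicator {0<..<x} t * ennreal (v t) \<partial>lebesgue) = 0"
    by (subst nn_integral_0_iff_AE) measurable
  then show ?thesis by (simp add: nn_integral_completion)
qed

lemma part_ii:
  fixes f :: "real \<Rightarrow> 'a::{banach, second_countable_topology}" and g :: "nat \<Rightarrow> real \<Rightarrow> 'a"
  assumes b: "0 < b" and n: "1 \<le> n" and ch: "deriv_chain b n f g" and L2: "\<forall>k\<le>n. L2_on b (g k)"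
    and nz: "\<exists>x\<in>{0..b}. f x \<noteq> 0"
  shows "(\<integral>\<^sup>+ x\<in>{0<..<b}. ennreal ((norm (g n x))\<^sup>2) \<partial>lebesgue)
           > ennreal ((real (odd_double_fact n))\<^sup>2 / 2 ^ (2 * n)) * (\<integral>\<^sup>+ x\<in>{0<..<b}. ennreal ((norm (f x))\<^sup>2 / (dist_bd b x) ^ (2 * n)) \<partial>lebesgue)"
proof -
  define a where "a = b / 2"
  have a: "0 < a" "a < b" using b by (auto simp: a_def)
  define w where "w j t = norm (indicator {0<..<b} t *\<^sub>R g j t)" for j t
  define w' where "w' j t = w j (b - t)" for j t
  have w_in: "t \<in> {0<..<b} \<Longrightarrow> w j t = norm (g j t)" for j t by (simp add: w_def)
  have w0: "0 \<le> w j t" "0 \<le> w' j t" for j t by (simp_all add: w_def w'_def)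
  have wm[measurable]: "w j \<in> borel_measurable lebesgue" if "j \<le> n" for j
  proof -
    have "set_borel_measurable lebesgue {0<..<b} (g j)" using L2 that by (simp add: L2_on_def)
    then have [measurable]: "(\<lambda>x. indicator {0<..<b} x *\<^sub>R g j x) \<in> borel_measurable lebesgue" unfolding set_borel_measurable_def .
    show ?thesis unfolding w_def by measurable
  qed
  have w'm: "w' j \<in> borel_measurable lebesgue" if "j \<le> n" for j
    unfolding w'_def by (rule refl_meas[OF wm[OF that]])
  have ac: "AC_with_deriv b (g j) (g (Suc j))" "g j 0 = 0" "g j b = 0" if "j < n" for j
    using ch that by (auto simp: deriv_chain_def)
  have fg: "x \<in> {0..b} \<Longrightarrow> f x = g 0 x" for x using ch by (auto simp: deriv_chain_def)
  have hypL: "ennreal (w j x) \<le> (\<integral>\<^sup>+t. indicator {0<..<x} t * ennreal (w (Suc j) t) \<partial>lborel)"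
    if j: "j < n" and x: "0 < x" "x < b" for j x
  proof -
    have "ennreal (w j x) = ennreal (norm (g j x))" using x by (simp add: w_in)
    also have "\<dots> \<le> (\<integral>\<^sup>+t. indicator {0<..<x} t * ennreal (norm (g (Suc j) t)) \<partial>lborel)"
      by (rule AC_left[OF ac(1,2)[OF j] x])
    also have "\<dots> = (\<integral>\<^sup>+t. indicator {0<..<x} t * ennreal (w (Suc j) t) \<partial>lborel)"
      by (intro nn_integral_cong) (use x in \<open>auto simp: indicator_def w_in\<close>)
    finally show ?thesis .
  qed
  have hypR: "ennreal (w' j x) \<le> (\<integral>\<^sup>+t. indicator {0<..<x} t * ennreal (w' (Suc j) t) \<partial>lborel)"
    if j: "j < n" and x: "0 < x" "x < b" for j x
  proof -
    have "ennreal (w' j x) = ennreal (norm (g j (b - x)))" using x by (simp add: w'_def w_in)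
    also have "\<dots> \<le> (\<integral>\<^sup>+t. indicator {b-x<..<b} t * ennreal (norm (g (Suc j) t)) \<partial>lborel)"
      by (rule AC_right[OF ac(1,3)[OF j]]) (use x in auto)
    also have "\<dots> = (\<integral>\<^sup>+t. indicator {b-x<..<b} t * ennreal (w (Suc j) t) \<partial>lborel)"
      by (intro nn_integral_cong) (use x in \<open>auto simp: indicator_def w_in\<close>)
    also have "\<dots> = (\<integral>\<^sup>+t. indicator {b-x<..<b} (b - t) * ennreal (w (Suc j) (b - t)) \<partial>lborel)"
    proof (rule refl_int)
      have [measurable]: "w (Suc j) \<in> borel_measurable lebesgue" using j by (intro wm) simp
      show "(\<lambda>t. indicator {b-x<..<b} t * ennreal (w (Suc j) t)) \<in> borel_measurable lebesgue" by measurable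
    qed
    also have "\<dots> = (\<integral>\<^sup>+t. indicator {0<..<x} t * ennreal (w' (Suc j) t) \<partial>lborel)"
      by (intro nn_integral_cong) (auto simp: indicator_def w'_def)
    finally show ?thesis .
  qed
  define P where "P = (\<Prod>k<n. 1/(real k+1/2)^2)"
  define c0 where "c0 = a powr (-(real (n-1)+1/2)) / (real (n-1)+1/2)^2"
  define Ql where "Ql = (\<integral>\<^sup>+x. indicator {0<..<a} x * ennreal ((w 0 x)^2 * x powr (-(2*real n))) \<partial>lborel)"
  define Qr where "Qr = (\<integral>\<^sup>+x. indicator {0<..<a} x * ennreal ((w' 0 x)^2 * x powr (-(2*real n))) \<partial>lborel)"
  define El where "El = (\<integral>\<^sup>+t. indicator {0<..<a} t * ennreal (t powr (1/2 - real (n-1)) * (w 1 t)^2) \<partial>lborel)"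
  define Er where "Er = (\<integral>\<^sup>+t. indicator {0<..<a} t * ennreal (t powr (1/2 - real (n-1)) * (w' 1 t)^2) \<partial>lborel)"
  define Ll where "Ll = (\<integral>\<^sup>+x. indicator {0<..<a} x * ennreal ((w n x)^2 * x powr 0) \<partial>lborel)"
  define Lr where "Lr = (\<integral>\<^sup>+x. indicator {0<..<a} x * ennreal ((w' n x)^2 * x powr 0) \<partial>lborel)"
  have SL: "Ql + ennreal c0 * El \<le> ennreal P * Ll"
    unfolding Ql_def El_def Ll_def c0_def P_def
    by (rule hardy_chain_strict[OF a(1) n]) (use wm w0 hypL a in auto)
  have SR: "Qr + ennreal c0 * Er \<le> ennreal P * Lr"
    unfolding Qr_def Er_def Lr_def c0_def P_def
    by (rule hardy_chain_strict[OF a(1) n]) (use w'm w0 hypR a in auto)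
  have aa: "b - a = a" by (simp add: a_def)
  have AEa: "AE x in lebesgue. x \<noteq> a" by (intro AE_completion AE_lborel_singleton)
  have [measurable]: "w n \<in> borel_measurable lebesgue" "w 0 \<in> borel_measurable lebesgue" by (auto intro: wm)
  have Leq: "(\<integral>\<^sup>+ x\<in>{0<..<b}. ennreal ((norm (g n x))\<^sup>2) \<partial>lebesgue) = Ll + Lr"
  proof -
    have "(\<integral>\<^sup>+ x\<in>{0<..<b}. ennreal ((norm (g n x))\<^sup>2) \<partial>lebesgue)
      = (\<integral>\<^sup>+x. indicator {0<..<a} x * ennreal ((w n x)^2 * x powr 0) + indicator {a<..<b} x * ennreal ((w n x)^2) \<partial>lebesgue)"
    proof (rule nn_integral_cong_AE)
      show "AE x in lebesgue. ennreal ((norm (g n x))\<^sup>2) * indicator {0<..<b} x =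
          indicator {0<..<a} x * ennreal ((w n x)^2 * x powr 0) + indicator {a<..<b} x * ennreal ((w n x)^2)"
        using AEa
      proof eventually_elim
        case (elim x)
        consider "x \<in> {0<..<a}" | "x \<in> {a<..<b}" | "x \<notin> {0<..<b}" using elim a by force
        then show ?case by cases (use a in \<open>auto simp: indicator_def w_in\<close>)
      qed
    qed
    also have "\<dots> = (\<integral>\<^sup>+x. indicator {0<..<a} x * ennreal ((w n x)^2 * x powr 0) \<partial>lebesgue)
         + (\<integral>\<^sup>+x. indicator {a<..<b} x * ennreal ((w n x)^2) \<partial>lebesgue)"
      by (rule nn_integral_add) measurable
    also have "(\<integral>\<^sup>+x. indicator {a<..<b} x * ennreal ((w n x)^2) \<partial>lebesgue)
        = (\<integral>\<^sup>+x. indicator {a<..<b} x * ennreal ((w n x)^2) \<partial>lborel)" by (simp add: nn_integral_completion)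
    also have "\<dots> = (\<integral>\<^sup>+x. indicator {a<..<b} (b - x) * ennreal ((w n (b - x))^2) \<partial>lborel)"
      by (rule refl_int) measurable
    also have "\<dots> = Lr" unfolding Lr_def
      by (intro nn_integral_cong) (use aa in \<open>auto simp: indicator_def w'_def\<close>)
    finally show ?thesis by (simp add: Ll_def nn_integral_completion)
  qed
  have Req: "(\<integral>\<^sup>+ x\<in>{0<..<b}. ennreal ((norm (f x))\<^sup>2 / (dist_bd b x) ^ (2 * n)) \<partial>lebesgue) = Ql + Qr"
  proof -
    have "(\<integral>\<^sup>+ x\<in>{0<..<b}. ennreal ((norm (f x))\<^sup>2 / (dist_bd b x) ^ (2 * n)) \<partial>lebesgue)
      = (\<integral>\<^sup>+x. indicator {0<..<a} x * ennreal ((w 0 x)^2 * x powr (-(2*real n)))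
           + indicator {a<..<b} x * ennreal ((w 0 x)^2 * (b - x) powr (-(2*real n))) \<partial>lebesgue)"
    proof (rule nn_integral_cong_AE)
      show "AE x in lebesgue. ennreal ((norm (f x))\<^sup>2 / (dist_bd b x) ^ (2 * n)) * indicator {0<..<b} x =
          indicator {0<..<a} x * ennreal ((w 0 x)^2 * x powr (-(2*real n)))
           + indicator {a<..<b} x * ennreal ((w 0 x)^2 * (b - x) powr (-(2*real n)))"
        using AEa
      proof eventually_elim
        case (elim x)
        consider "x \<in> {0<..<a}" | "x \<in> {a<..<b}" | "x \<notin> {0<..<b}" using elim a by force
        then show ?case
        proof cases
          case 1
          then have d: "dist_bd b x = x" using a by (auto simp: dist_bd_def a_def)
          have "x ^ (2*n) = x powr (2 * real n)" using 1 powr_realpow[of x "2*n"] by simp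
          then have "(norm (f x))\<^sup>2 / (dist_bd b x) ^ (2 * n) = (w 0 x)^2 * x powr (-(2*real n))"
            using 1 a by (simp add: d fg w_in powr_minus divide_inverse)
          then show ?thesis using 1 a by (auto simp: indicator_def)
        next
          case 2
          then have d: "dist_bd b x = b - x" using a by (auto simp: dist_bd_def a_def)
          have "(b - x) ^ (2*n) = (b - x) powr (2 * real n)" using 2 powr_realpow[of "b - x" "2*n"] by simp
          then have "(norm (f x))\<^sup>2 / (dist_bd b x) ^ (2 * n) = (w 0 x)^2 * (b - x) powr (-(2*real n))"
            using 2 a by (simp add: d fg w_in powr_minus divide_inverse)
          then show ?thesis using 2 a by (auto simp: indicator_def)
        next
          case 3
          then show ?thesis using a by (auto simp: indicator_def)
        qed
      qed
    qed
    also have "\<dots> = (\<integral>\<^sup>+x. indicator {0<..<a} x * ennreal ((w 0 x)^2 * x powr (-(2*real n))) \<partial>lebesgue)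
         + (\<integral>\<^sup>+x. indicator {a<..<b} x * ennreal ((w 0 x)^2 * (b - x) powr (-(2*real n))) \<partial>lebesgue)"
      by (rule nn_integral_add) measurable
    also have "(\<integral>\<^sup>+x. indicator {a<..<b} x * ennreal ((w 0 x)^2 * (b - x) powr (-(2*real n))) \<partial>lebesgue)
        = (\<integral>\<^sup>+x. indicator {a<..<b} x * ennreal ((w 0 x)^2 * (b - x) powr (-(2*real n))) \<partial>lborel)"
      by (simp add: nn_integral_completion)
    also have "\<dots> = (\<integral>\<^sup>+x. indicator {a<..<b} (b - x) * ennreal ((w 0 (b - x))^2 * (b - (b - x)) powr (-(2*real n))) \<partial>lborel)"
      by (rule refl_int) measurable
    also have "\<dots> = Qr" unfolding Qr_def
      by (intro nn_integral_cong) (use aa in \<open>auto simp: indicator_def w'_def\<close>)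
    finally show ?thesis by (simp add: Ql_def nn_integral_completion)
  qed
  have Lfin: "Ll + Lr < \<infinity>"
  proof -
    have "set_integrable lebesgue {0<..<b} (\<lambda>x. (norm (g n x))\<^sup>2)" using L2 by (simp add: L2_on_def)
    then have "integrable lebesgue (\<lambda>x. indicator {0<..<b} x *\<^sub>R (norm (g n x))\<^sup>2)" by (simp add: set_integrable_def)
    then have "(\<integral>\<^sup>+x. ennreal (norm (indicator {0<..<b} x *\<^sub>R (norm (g n x))\<^sup>2)) \<partial>lebesgue) < \<infinity>"
      by (simp add: integrable_iff_bounded)
    also have "(\<integral>\<^sup>+x. ennreal (norm (indicator {0<..<b} x *\<^sub>R (norm (g n x))\<^sup>2)) \<partial>lebesgue)
       = (\<integral>\<^sup>+ x\<in>{0<..<b}. ennreal ((norm (g n x))\<^sup>2) \<partial>lebesgue)"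
      by (intro nn_integral_cong) (auto simp: indicator_def)
    finally show ?thesis using Leq by simp
  qed
  have Epos: "El \<noteq> 0 \<or> Er \<noteq> 0"
  proof (rule ccontr)
    assume "\<not> (El \<noteq> 0 \<or> Er \<noteq> 0)"
    then have z: "El = 0" "Er = 0" by auto
    have m1: "w 1 \<in> borel_measurable lebesgue" "w' 1 \<in> borel_measurable lebesgue" using n by (auto intro: wm w'm)
    have zl: "(\<integral>\<^sup>+t. indicator {0<..<x} t * ennreal (w 1 t) \<partial>lborel) = 0" if "x \<le> a" for x
      by (rule zero_int_aux[OF m1(1) w0(1) z(1)[unfolded El_def] that])
    have zr: "(\<integral>\<^sup>+t. indicator {0<..<x} t * ennreal (w' 1 t) \<partial>lborel) = 0" if "x \<le> a" for x
      by (rule zero_int_aux[OF m1(2) w0(2) z(2)[unfolded Er_def] that])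
    have "f x = 0" if x: "x \<in> {0..b}" for x
    proof -
      have n0: "0 < n" using n by simp
      consider "x = 0" | "x = b" | "0 < x" "x \<le> a" | "a < x" "x < b" using x a by force
      then show ?thesis
      proof cases
        case 1 then show ?thesis using fg[OF x] ac(2)[OF n0] by simp
      next
        case 2 then show ?thesis using fg[OF x] ac(3)[OF n0] by simp
      next
        case 3
        have "ennreal (w 0 x) \<le> 0" using hypL[OF n0 3(1)] zl[OF 3(2)] 3 a by simp
        then have "w 0 x = 0" using w0(1)[of 0 x] by simp
        then show ?thesis using fg[OF x] w_in[of x 0] 3 a by simp
      next
        case 4
        have "ennreal (w' 0 (b - x)) \<le> 0" using hypR[OF n0, of "b - x"] zr[of "b - x"] 4 a aa by simp
        then have "w' 0 (b - x) = 0" using w0(2)[of 0 "b - x"] by simp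
        then show ?thesis using fg[OF x] w_in[of x 0] 4 a by (simp add: w'_def)
      qed
    qed
    then show False using nz by auto
  qed
  define C where "C = (real (odd_double_fact n))\<^sup>2 / 2 ^ (2 * n)"
  have CP: "C * P = 1" unfolding C_def P_def by (rule CP1)
  have "0 < real (odd_double_fact n)" unfolding odd_double_fact_prod by (rule prod_pos) auto
  then have Cpos: "0 < C" unfolding C_def by simp
  have c0pos: "0 < c0" unfolding c0_def using a by auto
  have "ennreal C * (Ql + Qr) + ennreal C * (ennreal c0 * El + ennreal c0 * Er)
      = ennreal C * ((Ql + ennreal c0 * El) + (Qr + ennreal c0 * Er))"
    by (simp add: algebra_simps)
  also have "\<dots> \<le> ennreal C * (ennreal P * Ll + ennreal P * Lr)"
    by (intro mult_left_mono add_mono SL SR) simp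
  also have "\<dots> = ennreal (C * P) * (Ll + Lr)"
    using Cpos by (simp add: ennreal_mult P_def prod_nonneg algebra_simps)
  also have "\<dots> = Ll + Lr" using CP by simp
  finally have fin: "ennreal C * (Ql + Qr) + ennreal C * (ennreal c0 * El + ennreal c0 * Er) \<le> Ll + Lr" .
  have pos: "0 < ennreal C * (ennreal c0 * El + ennreal c0 * Er)"
  proof -
    have "El + Er \<noteq> 0" using Epos by simp
    then have "0 < El + Er" by (simp add: zero_less_iff_neq_zero)
    then have "0 < ennreal c0 * (El + Er)" using c0pos by (simp add: ennreal_zero_less_mult_iff)
    then have "0 < ennreal c0 * El + ennreal c0 * Er" by (simp add: distrib_left)
    then show ?thesis using Cpos by (subst ennreal_zero_less_mult_iff) simp
  qed
  have "ennreal C * (Ql + Qr) < Ll + Lr"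
    by (rule ennreal_strict_aux[OF fin Lfin pos])
  then show ?thesis using Leq Req by (simp add: C_def)
qed

lemma split_half:
  fixes F :: "real \<Rightarrow> real"
  assumes Fm[measurable]: "F \<in> borel_measurable lebesgue" and b: "0 < b"
  shows "(\<integral>\<^sup>+ x\<in>{0<..<b}. ennreal (F x) \<partial>lebesgue)
    = (\<integral>\<^sup>+x. indicator {0<..<b/2} x * ennreal (F x) \<partial>lborel) + (\<integral>\<^sup>+x. indicator {0<..<b/2} x * ennreal (F (b - x)) \<partial>lborel)"
proof -
  define a where "a = b/2"
  have a: "0 < a" "a < b" "b - a = a" using b by (auto simp: a_def)
  have AEa: "AE x in lebesgue. x \<noteq> a" by (intro AE_completion AE_lborel_singleton)
  have "(\<integral>\<^sup>+ x\<in>{0<..<b}. ennreal (F x) \<partial>lebesgue)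
      = (\<integral>\<^sup>+x. indicator {0<..<a} x * ennreal (F x) + indicator {a<..<b} x * ennreal (F x) \<partial>lebesgue)"
  proof (rule nn_integral_cong_AE)
    show "AE x in lebesgue. ennreal (F x) * indicator {0<..<b} x = indicator {0<..<a} x * ennreal (F x) + indicator {a<..<b} x * ennreal (F x)"
      using AEa
    proof eventually_elim
      case (elim x)
      consider "x \<in> {0<..<a}" | "x \<in> {a<..<b}" | "x \<notin> {0<..<b}" using elim a by force
      then show ?case by cases (use a in \<open>auto simp: indicator_def\<close>)
    qed
  qed
  also have "\<dots> = (\<integral>\<^sup>+x. indicator {0<..<a} x * ennreal (F x) \<partial>lebesgue) + (\<integral>\<^sup>+x. indicator {a<..<b} x * ennreal (F x) \<partial>lebesgue)"
    by (rule nn_integral_add) measurable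
  also have "(\<integral>\<^sup>+x. indicator {a<..<b} x * ennreal (F x) \<partial>lebesgue) = (\<integral>\<^sup>+x. indicator {a<..<b} x * ennreal (F x) \<partial>lborel)"
    by (simp add: nn_integral_completion)
  also have "\<dots> = (\<integral>\<^sup>+x. indicator {a<..<b} (b - x) * ennreal (F (b - x)) \<partial>lborel)"
    by (rule refl_int) measurable
  also have "\<dots> = (\<integral>\<^sup>+x. indicator {0<..<a} x * ennreal (F (b - x)) \<partial>lborel)"
    by (intro nn_integral_cong) (use a in \<open>auto simp: indicator_def\<close>)
  finally show ?thesis by (simp add: a_def nn_integral_completion)
qed

lemma part_i_bound:
  fixes f :: "real \<Rightarrow> 'a::{banach, second_countable_topology}" and g :: "nat \<Rightarrow> real \<Rightarrow> 'a"
  assumes b: "0 < b" and ch: "deriv_chain b n f g" and L2n: "L2_on b (g n)" and k: "k \<le> n"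
  shows "(\<integral>\<^sup>+ x\<in>{0<..<b}. ennreal ((norm (g k x))\<^sup>2) \<partial>lebesgue)
     \<le> ennreal ((b/2) powr (2*real (n-k)) * (\<Prod>j<n-k. 1/(real j+1/2)^2)) * (\<integral>\<^sup>+ x\<in>{0<..<b}. ennreal ((norm (g n x))\<^sup>2) \<partial>lebesgue)"
proof -
  define a where "a = b / 2"
  have a: "0 < a" "a < b" using b by (auto simp: a_def)
  define w where "w j t = norm (indicator {0<..<b} t *\<^sub>R g j t)" for j t
  define w' where "w' j t = w j (b - t)" for j t
  have w_in: "t \<in> {0<..<b} \<Longrightarrow> w j t = norm (g j t)" for j t by (simp add: w_def)
  have w0: "0 \<le> w j t" "0 \<le> w' j t" for j t by (simp_all add: w_def w'_def)
  have ac: "AC_with_deriv b (g j) (g (Suc j))" "g j 0 = 0" "g j b = 0" if "j < n" for j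
    using ch that by (auto simp: deriv_chain_def)
  have wm[measurable]: "w j \<in> borel_measurable lebesgue" if "j \<le> n" for j
  proof -
    have "set_borel_measurable lebesgue {0<..<b} (g j)"
    proof (cases "j = n")
      case True then show ?thesis using L2n by (simp add: L2_on_def)
    next
      case False then show ?thesis using that by (intro AC_meas[OF ac(1)]) simp
    qed
    then have [measurable]: "(\<lambda>x. indicator {0<..<b} x *\<^sub>R g j x) \<in> borel_measurable lebesgue" unfolding set_borel_measurable_def .
    show ?thesis unfolding w_def by measurable
  qed
  have w'm: "w' j \<in> borel_measurable lebesgue" if "j \<le> n" for j
    unfolding w'_def by (rule refl_meas[OF wm[OF that]])
  have hypL: "ennreal (w j x) \<le> (\<integral>\<^sup>+t. indicator {0<..<x} t * ennreal (w (Suc j) t) \<partial>lborel)"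
    if j: "j < n" and x: "0 < x" "x < b" for j x
  proof -
    have "ennreal (w j x) = ennreal (norm (g j x))" using x by (simp add: w_in)
    also have "\<dots> \<le> (\<integral>\<^sup>+t. indicator {0<..<x} t * ennreal (norm (g (Suc j) t)) \<partial>lborel)"
      by (rule AC_left[OF ac(1,2)[OF j] x])
    also have "\<dots> = (\<integral>\<^sup>+t. indicator {0<..<x} t * ennreal (w (Suc j) t) \<partial>lborel)"
      by (intro nn_integral_cong) (use x in \<open>auto simp: indicator_def w_in\<close>)
    finally show ?thesis .
  qed
  have hypR: "ennreal (w' j x) \<le> (\<integral>\<^sup>+t. indicator {0<..<x} t * ennreal (w' (Suc j) t) \<partial>lborel)"
    if j: "j < n" and x: "0 < x" "x < b" for j x
  proof -
    have "ennreal (w' j x) = ennreal (norm (g j (b - x)))" using x by (simp add: w'_def w_in)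
    also have "\<dots> \<le> (\<integral>\<^sup>+t. indicator {b-x<..<b} t * ennreal (norm (g (Suc j) t)) \<partial>lborel)"
      by (rule AC_right[OF ac(1,3)[OF j]]) (use x in auto)
    also have "\<dots> = (\<integral>\<^sup>+t. indicator {b-x<..<b} t * ennreal (w (Suc j) t) \<partial>lborel)"
      by (intro nn_integral_cong) (use x in \<open>auto simp: indicator_def w_in\<close>)
    also have "\<dots> = (\<integral>\<^sup>+t. indicator {b-x<..<b} (b - t) * ennreal (w (Suc j) (b - t)) \<partial>lborel)"
    proof (rule refl_int)
      have [measurable]: "w (Suc j) \<in> borel_measurable lebesgue" using j by (intro wm) simp
      show "(\<lambda>t. indicator {b-x<..<b} t * ennreal (w (Suc j) t)) \<in> borel_measurable lebesgue" by measurable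
    qed
    also have "\<dots> = (\<integral>\<^sup>+t. indicator {0<..<x} t * ennreal (w' (Suc j) t) \<partial>lborel)"
      by (intro nn_integral_cong) (auto simp: indicator_def w'_def)
    finally show ?thesis .
  qed
  define m where "m = n - k"
  have nm: "n - m = k" "m \<le> n" using k by (auto simp: m_def)
  define P where "P = (\<Prod>j<m. 1/(real j+1/2)^2)"
  have Pnn: "0 \<le> P" unfolding P_def by (rule prod_nonneg) auto
  define A where "A = a powr (2*real m)"
  have CL: "(\<integral>\<^sup>+x. indicator {0<..<a} x * ennreal ((w k x)^2 * x powr (-(2*real m))) \<partial>lborel)
     \<le> ennreal P * (\<integral>\<^sup>+x. indicator {0<..<a} x * ennreal ((w n x)^2 * x powr 0) \<partial>lborel)"
    unfolding P_def using hardy_chain[OF a(1), of n w m] wm w0 hypL a nm by auto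
  have CR: "(\<integral>\<^sup>+x. indicator {0<..<a} x * ennreal ((w' k x)^2 * x powr (-(2*real m))) \<partial>lborel)
     \<le> ennreal P * (\<integral>\<^sup>+x. indicator {0<..<a} x * ennreal ((w' n x)^2 * x powr 0) \<partial>lborel)"
    unfolding P_def using hardy_chain[OF a(1), of n w' m] w'm w0 hypR a nm by auto
  have pw: "indicator {0<..<a} x * ennreal (v x ^ 2) \<le> ennreal A * (indicator {0<..<a} x * ennreal (v x ^ 2 * x powr (-(2*real m))))"
    for v :: "real \<Rightarrow> real" and x
  proof (cases "x \<in> {0<..<a}")
    case True
    have "a powr (-(2*real m)) \<le> x powr (-(2*real m))" using True by (intro powr_mono2') auto
    then have "v x ^ 2 * (a powr (2*real m) * a powr (-(2*real m))) \<le> v x ^ 2 * (a powr (2*real m) * x powr (-(2*real m)))"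
      by (intro mult_left_mono) auto
    moreover have "a powr (2*real m) * a powr (-(2*real m)) = 1" using a by (simp add: powr_add[symmetric])
    ultimately have "v x ^ 2 \<le> A * (v x ^ 2 * x powr (-(2*real m)))" by (simp add: A_def algebra_simps)
    then have "ennreal (v x ^ 2) \<le> ennreal (A * (v x ^ 2 * x powr (-(2*real m))))" by (rule ennreal_leI)
    then show ?thesis using True by (simp add: ennreal_mult A_def)
  qed simp
  have [measurable]: "w k \<in> borel_measurable lebesgue" "w' k \<in> borel_measurable lebesgue"
    "w n \<in> borel_measurable lebesgue" "w' n \<in> borel_measurable lebesgue" using k by (auto intro: wm w'm)
  have int_gen: "(\<integral>\<^sup>+x. indicator {0<..<a} x * ennreal ((v x)^2) \<partial>lborel)
     \<le> ennreal A * (\<integral>\<^sup>+x. indicator {0<..<a} x * ennreal ((v x)^2 * x powr (-(2*real m))) \<partial>lborel)"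
    if vm[measurable]: "v \<in> borel_measurable lebesgue" for v :: "real \<Rightarrow> real"
  proof -
    have "(\<integral>\<^sup>+x. indicator {0<..<a} x * ennreal ((v x)^2) \<partial>lborel)
       \<le> (\<integral>\<^sup>+x. ennreal A * (indicator {0<..<a} x * ennreal ((v x)^2 * x powr (-(2*real m)))) \<partial>lborel)"
      by (intro nn_integral_mono pw)
    also have "\<dots> = (\<integral>\<^sup>+x. ennreal A * (indicator {0<..<a} x * ennreal ((v x)^2 * x powr (-(2*real m)))) \<partial>lebesgue)"
      by (simp add: nn_integral_completion)
    also have "\<dots> = ennreal A * (\<integral>\<^sup>+x. indicator {0<..<a} x * ennreal ((v x)^2 * x powr (-(2*real m))) \<partial>lebesgue)"
      by (rule nn_integral_cmult) measurable
    finally show ?thesis by (simp add: nn_integral_completion)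
  qed
  have powr0: "(\<integral>\<^sup>+x. indicator {0<..<a} x * ennreal ((v x)^2 * x powr 0) \<partial>lborel)
      = (\<integral>\<^sup>+x. indicator {0<..<a} x * ennreal ((v x)^2) \<partial>lborel)" for v :: "real \<Rightarrow> real"
    by (intro nn_integral_cong) (auto simp: indicator_def)
  have tot: "(\<integral>\<^sup>+ x\<in>{0<..<b}. ennreal ((norm (g j x))\<^sup>2) \<partial>lebesgue)
     = (\<integral>\<^sup>+x. indicator {0<..<a} x * ennreal ((w j x)^2) \<partial>lborel) + (\<integral>\<^sup>+x. indicator {0<..<a} x * ennreal ((w' j x)^2) \<partial>lborel)"
    if j: "j \<le> n" for j
  proof -
    have [measurable]: "w j \<in> borel_measurable lebesgue" using j by (rule wm)
    have "(\<integral>\<^sup>+ x\<in>{0<..<b}. ennreal ((norm (g j x))\<^sup>2) \<partial>lebesgue) = (\<integral>\<^sup>+ x\<in>{0<..<b}. ennreal ((w j x)\<^sup>2) \<partial>lebesgue)"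
      by (intro nn_integral_cong) (auto simp: indicator_def w_in)
    also have "\<dots> = (\<integral>\<^sup>+x. indicator {0<..<b/2} x * ennreal ((w j x)^2) \<partial>lborel) + (\<integral>\<^sup>+x. indicator {0<..<b/2} x * ennreal ((w j (b - x))^2) \<partial>lborel)"
      by (rule split_half[OF _ b]) measurable
    finally show ?thesis by (simp add: a_def w'_def)
  qed
  have "(\<integral>\<^sup>+ x\<in>{0<..<b}. ennreal ((norm (g k x))\<^sup>2) \<partial>lebesgue)
     \<le> ennreal A * (ennreal P * (\<integral>\<^sup>+x. indicator {0<..<a} x * ennreal ((w n x)^2) \<partial>lborel))
      + ennreal A * (ennreal P * (\<integral>\<^sup>+x. indicator {0<..<a} x * ennreal ((w' n x)^2) \<partial>lborel))"
    unfolding tot[OF k]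
  proof (intro add_mono)
    show "(\<integral>\<^sup>+x. indicator {0<..<a} x * ennreal ((w k x)^2) \<partial>lborel)
      \<le> ennreal A * (ennreal P * (\<integral>\<^sup>+x. indicator {0<..<a} x * ennreal ((w n x)^2) \<partial>lborel))"
      using order_trans[OF int_gen[of "w k"] mult_left_mono[OF CL[unfolded powr0], of "ennreal A"]] by simp
    show "(\<integral>\<^sup>+x. indicator {0<..<a} x * ennreal ((w' k x)^2) \<partial>lborel)
      \<le> ennreal A * (ennreal P * (\<integral>\<^sup>+x. indicator {0<..<a} x * ennreal ((w' n x)^2) \<partial>lborel))"
      using order_trans[OF int_gen[of "w' k"] mult_left_mono[OF CR[unfolded powr0], of "ennreal A"]] by simp
  qed
  also have "\<dots> = ennreal (A * P) * (\<integral>\<^sup>+ x\<in>{0<..<b}. ennreal ((norm (g n x))\<^sup>2) \<partial>lebesgue)"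
    unfolding tot[OF order_refl] using Pnn by (simp add: ennreal_mult A_def algebra_simps)
  finally show ?thesis by (simp add: A_def P_def m_def a_def)
qed

lemma LINT_eq_nn:
  fixes h :: "real \<Rightarrow> 'a::{banach, second_countable_topology}"
  assumes "set_integrable lebesgue {0<..<b} (\<lambda>x. (norm (h x))\<^sup>2)"
  shows "ennreal (LINT x:{0<..<b}|lebesgue. (norm (h x))\<^sup>2) = (\<integral>\<^sup>+ x\<in>{0<..<b}. ennreal ((norm (h x))\<^sup>2) \<partial>lebesgue)"
proof -
  have i: "integrable lebesgue (\<lambda>x. indicator {0<..<b} x *\<^sub>R (norm (h x))\<^sup>2)" using assms by (simp add: set_integrable_def)
  have "(\<integral>\<^sup>+x. ennreal (indicator {0<..<b} x *\<^sub>R (norm (h x))\<^sup>2) \<partial>lebesgue) = ennreal (LINT x|lebesgue. indicator {0<..<b} x *\<^sub>R (norm (h x))\<^sup>2)"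
    by (rule nn_integral_eq_integral[OF i]) auto
  moreover have "(\<integral>\<^sup>+x. ennreal (indicator {0<..<b} x *\<^sub>R (norm (h x))\<^sup>2) \<partial>lebesgue) = (\<integral>\<^sup>+ x\<in>{0<..<b}. ennreal ((norm (h x))\<^sup>2) \<partial>lebesgue)"
    by (intro nn_integral_cong) (auto simp: indicator_def)
  ultimately show ?thesis by (simp add: set_lebesgue_integral_def)
qed

lemma L2_fin:
  fixes h :: "real \<Rightarrow> 'a::{banach, second_countable_topology}"
  assumes "L2_on b h"
  shows "(\<integral>\<^sup>+ x\<in>{0<..<b}. ennreal ((norm (h x))\<^sup>2) \<partial>lebesgue) < \<infinity>"
proof -
  have "set_integrable lebesgue {0<..<b} (\<lambda>x. (norm (h x))\<^sup>2)" using assms by (simp add: L2_on_def)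
  note e = LINT_eq_nn[OF this]
  show ?thesis unfolding e[symmetric] by simp
qed

lemma L2_all:
  fixes f :: "real \<Rightarrow> 'a::{banach, second_countable_topology}" and g :: "nat \<Rightarrow> real \<Rightarrow> 'a"
  assumes b: "0 < b" and ch: "deriv_chain b n f g" and L2n: "L2_on b (g n)" and k: "k \<le> n"
  shows "L2_on b (g k)"
proof -
  have ac: "AC_with_deriv b (g j) (g (Suc j))" if "j < n" for j
    using ch that by (auto simp: deriv_chain_def)
  have sm: "set_borel_measurable lebesgue {0<..<b} (g k)"
  proof (cases "k = n")
    case True then show ?thesis using L2n by (simp add: L2_on_def)
  next
    case False then show ?thesis using k by (intro AC_meas[OF ac]) simp
  qed
  then have [measurable]: "(\<lambda>x. indicator {0<..<b} x *\<^sub>R g k x) \<in> borel_measurable lebesgue" unfolding set_borel_measurable_def .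
  have "(\<integral>\<^sup>+ x\<in>{0<..<b}. ennreal ((norm (g k x))\<^sup>2) \<partial>lebesgue) < \<infinity>"
    using part_i_bound[OF b ch L2n k] L2_fin[OF L2n]
    by (simp add: ennreal_mult_less_top order_le_less_trans)
  moreover have "(\<integral>\<^sup>+ x\<in>{0<..<b}. ennreal ((norm (g k x))\<^sup>2) \<partial>lebesgue)
      = (\<integral>\<^sup>+x. ennreal (norm (indicator {0<..<b} x *\<^sub>R (norm (g k x))\<^sup>2)) \<partial>lebesgue)"
    by (intro nn_integral_cong) (auto simp: indicator_def)
  ultimately have fin: "(\<integral>\<^sup>+x. ennreal (norm (indicator {0<..<b} x *\<^sub>R (norm (g k x))\<^sup>2)) \<partial>lebesgue) < \<infinity>" by simp
  have eqf: "(\<lambda>x. indicator {0<..<b} x *\<^sub>R (norm (g k x))\<^sup>2) = (\<lambda>x. (norm (indicator {0<..<b} x *\<^sub>R g k x))\<^sup>2)"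
    by (auto simp: indicator_def fun_eq_iff)
  have mf: "(\<lambda>x. (norm (indicator {0<..<b} x *\<^sub>R g k x))\<^sup>2) \<in> borel_measurable lebesgue" by measurable
  have "integrable lebesgue (\<lambda>x. indicator {0<..<b} x *\<^sub>R (norm (g k x))\<^sup>2)"
    by (rule integrableI_bounded[OF _ fin]) (subst eqf, rule mf)
  then show ?thesis using sm by (simp add: L2_on_def set_integrable_def)
qed

lemma part_i_LINT:
  fixes f :: "real \<Rightarrow> 'a::{banach, second_countable_topology}" and g :: "nat \<Rightarrow> real \<Rightarrow> 'a"
  assumes b: "0 < b" and ch: "deriv_chain b n f g" and L2n: "L2_on b (g n)" and k: "k \<le> n"
  shows "(LINT x:{0<..<b}|lebesgue. (norm (g k x))\<^sup>2)
     \<le> ((b/2) powr (2*real (n-k)) * (\<Prod>j<n-k. 1/(real j+1/2)^2)) * (LINT x:{0<..<b}|lebesgue. (norm (g n x))\<^sup>2)"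
proof -
  define K where "K = (b/2) powr (2*real (n-k)) * (\<Prod>j<n-k. 1/(real j+1/2)^2)"
  have K: "0 \<le> K" unfolding K_def by (intro mult_nonneg_nonneg prod_nonneg) auto
  have ik: "set_integrable lebesgue {0<..<b} (\<lambda>x. (norm (g k x))\<^sup>2)" using L2_all[OF b ch L2n k] by (simp add: L2_on_def)
  have inn: "set_integrable lebesgue {0<..<b} (\<lambda>x. (norm (g n x))\<^sup>2)" using L2n by (simp add: L2_on_def)
  have nn: "0 \<le> (LINT x:{0<..<b}|lebesgue. (norm (g n x))\<^sup>2)"
    unfolding set_lebesgue_integral_def by (rule Bochner_Integration.integral_nonneg) auto
  have "ennreal (LINT x:{0<..<b}|lebesgue. (norm (g k x))\<^sup>2) \<le> ennreal K * ennreal (LINT x:{0<..<b}|lebesgue. (norm (g n x))\<^sup>2)"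
    using part_i_bound[OF b ch L2n k] unfolding LINT_eq_nn[OF ik] LINT_eq_nn[OF inn] K_def .
  also have "\<dots> = ennreal (K * (LINT x:{0<..<b}|lebesgue. (norm (g n x))\<^sup>2))" using K nn by (simp add: ennreal_mult)
  finally show ?thesis unfolding K_def[symmetric] using K nn
    by (subst (asm) ennreal_le_iff) (auto intro: mult_nonneg_nonneg)
qed

lemma part_i_set:
  assumes b: "0 < b"
  shows "H_n b n = (H0_n b n :: (real \<Rightarrow> 'a::{banach, second_countable_topology}) set)"
proof
  show "H_n b n \<subseteq> (H0_n b n :: (real \<Rightarrow> 'a) set)"
  proof
    fix f :: "real \<Rightarrow> 'a" assume "f \<in> H_n b n"
    then obtain g where ch: "deriv_chain b n f g" and L2n: "L2_on b (g n)" by (auto simp: H_n_def)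
    have "\<forall>k\<le>n. L2_on b (g k)" using L2_all[OF b ch L2n] by blast
    then show "f \<in> H0_n b n" using ch by (auto simp: H0_n_def)
  qed
  show "(H0_n b n :: (real \<Rightarrow> 'a) set) \<subseteq> H_n b n" by (auto simp: H0_n_def H_n_def)
qed

lemma part_i_norm:
  assumes b: "0 < b"
  shows "\<exists>c1 c2. 0 < c1 \<and> 0 < c2 \<and>
         (\<forall>(f :: real \<Rightarrow> 'a::{banach, second_countable_topology}) g. deriv_chain b n f g \<and> (\<forall>k\<le>n. L2_on b (g k)) \<longrightarrow>
            c1 * sobolev_norm b n g \<le> L2_norm_on b (g n) \<and>
            L2_norm_on b (g n) \<le> c2 * sobolev_norm b n g)"
proof -
  define K where "K k = (b/2) powr (2*real (n-k)) * (\<Prod>j<n-k. 1/(real j+1/2)^2)" for k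
  define S where "S = (\<Sum>k\<le>n. K k)"
  have Knn: "0 \<le> K k" for k unfolding K_def by (intro mult_nonneg_nonneg prod_nonneg) auto
  have Kn: "K n = 1" using b by (simp add: K_def)
  have S1: "1 \<le> S" unfolding S_def using member_le_sum[of n "{..n}" K] Knn Kn by simp
  have Spos: "0 < S" using S1 by simp
  show ?thesis
  proof (intro exI conjI allI impI)
    show "0 < 1 / sqrt S" using Spos by simp
    show "(0::real) < 1" by simp
    fix f :: "real \<Rightarrow> 'a" and g
    assume A: "deriv_chain b n f g \<and> (\<forall>k\<le>n. L2_on b (g k))"
    then have ch: "deriv_chain b n f g" and L2n: "L2_on b (g n)" by auto
    define I where "I k = (LINT x:{0<..<b}|lebesgue. (norm (g k x))\<^sup>2)" for k
    have Inn: "0 \<le> I k" for k unfolding I_def set_lebesgue_integral_def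
      by (rule Bochner_Integration.integral_nonneg) auto
    have Ile: "I k \<le> K k * I n" if "k \<le> n" for k
      unfolding I_def K_def by (rule part_i_LINT[OF b ch L2n that])
    have L2n_eq: "L2_norm_on b (g k) = sqrt (I k)" for k by (simp add: L2_norm_on_def I_def)
    have sob: "sobolev_norm b n g = sqrt (\<Sum>k\<le>n. I k)"
      unfolding sobolev_norm_def L2n_eq using Inn by simp
    have "(\<Sum>k\<le>n. I k) \<le> (\<Sum>k\<le>n. K k * I n)" by (intro sum_mono Ile) simp
    also have "\<dots> = S * I n" by (simp add: S_def sum_distrib_right)
    finally have "sqrt (\<Sum>k\<le>n. I k) \<le> sqrt S * sqrt (I n)" by (simp add: real_sqrt_mult[symmetric])
    then show "1 / sqrt S * sobolev_norm b n g \<le> L2_norm_on b (g n)"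
      using Spos by (simp add: sob L2n_eq field_simps)
    have "I n \<le> (\<Sum>k\<le>n. I k)" using member_le_sum[of n "{..n}" I] Inn by simp
    then show "L2_norm_on b (g n) \<le> 1 * sobolev_norm b n g" by (simp add: sob L2n_eq)
  qed
qed



declare id_leb[measurable del]

definition ff :: "real \<Rightarrow> nat \<Rightarrow> real" where "ff q j = (\<Prod>i<j. q - real i)"
definition cc :: "nat \<Rightarrow> real \<Rightarrow> nat \<Rightarrow> real" where "cc n b m = real (n choose m) * b^(n-m) * (-1)^m"
definition phi :: "nat \<Rightarrow> real \<Rightarrow> real \<Rightarrow> nat \<Rightarrow> real \<Rightarrow> real" where
  "phi n b p j x = (\<Sum>m\<le>n. cc n b m * ff (p + real m) j * x powr (p + real m - real j))"

lemma ff_0[simp]: "ff q 0 = 1" by (simp add: ff_def)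
lemma ff_Suc: "ff q (Suc j) = ff q j * (q - real j)" by (simp add: ff_def)

lemma ff_diff: "ff (x + 1) (Suc j) - ff x (Suc j) = real (Suc j) * ff x j"
proof -
  have a: "ff (x+1) (Suc j) = (x + 1) * ff x j"
    by (induction j) (simp_all add: ff_Suc algebra_simps)
  have "ff (x + 1) (Suc j) - ff x (Suc j) = (x + 1) * ff x j - ff x j * (x - real j)"
    by (subst a) (simp only: ff_Suc)
  then show ?thesis by (simp add: algebra_simps)
qed

lemma phi_deriv:
  assumes "0 < x"
  shows "((phi n b p j) has_real_derivative phi n b p (Suc j) x) (at x)"
  unfolding phi_def[abs_def]
proof (rule DERIV_sum)
  fix m assume "m \<in> {..n}"
  have "((\<lambda>x. cc n b m * ff (p + real m) j * x powr (p + real m - real j)) has_real_derivative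
     cc n b m * ff (p + real m) j * ((p + real m - real j) * x powr (p + real m - real j - 1))) (at x)"
    using assms by (auto intro!: derivative_eq_intros)
  moreover have "cc n b m * ff (p + real m) j * ((p + real m - real j) * x powr (p + real m - real j - 1))
     = cc n b m * ff (p + real m) (Suc j) * x powr (p + real m - real (Suc j))"
    by (simp add: ff_Suc algebra_simps diff_diff_eq)
  ultimately show "((\<lambda>x. cc n b m * ff (p + real m) j * x powr (p + real m - real j)) has_real_derivative
     cc n b m * ff (p + real m) (Suc j) * x powr (p + real m - real (Suc j))) (at x)" by simp
qed

lemma phi_zero[simp]: "phi n b p j 0 = 0" by (simp add: phi_def)

lemma phi_cont:
  assumes "j < n" "real n - 1 < p"
  shows "continuous_on {0..} (phi n b p j)"
  unfolding phi_def[abs_def]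
proof (intro continuous_on_sum continuous_on_mult continuous_on_const)
  fix m assume "m \<in> {..n}"
  show "continuous_on {0..} (\<lambda>x. x powr (p + real m - real j))"
    by (rule continuous_on_powr') (use assms in \<open>auto intro!: continuous_intros\<close>)
qed

definition SS :: "nat \<Rightarrow> nat \<Rightarrow> real \<Rightarrow> real" where
  "SS n j q = (\<Sum>m\<le>n. real (n choose m) * (-1)^m * ff (q + real m) j)"

lemma SS_Suc: "SS (Suc n) j q = SS n j q - SS n j (q + 1)"
proof -
  define G where "G m = real (n choose m) * (-1)^m * ff (q + real m) j" for m
  have e1: "SS n j q = G 0 + (\<Sum>m\<le>n. G (Suc m))"
  proof -
    have "SS n j q = (\<Sum>m\<le>Suc n. G m)" unfolding SS_def G_def by (simp add: sum.atMost_Suc)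
    also have "\<dots> = G 0 + (\<Sum>m\<le>n. G (Suc m))" by (rule sum.atMost_Suc_shift)
    finally show ?thesis .
  qed
  have e2: "SS (Suc n) j q = G 0 + (\<Sum>m\<le>n. G (Suc m) - real (n choose m) * (-1)^m * ff (q + 1 + real m) j)"
  proof -
    have "SS (Suc n) j q = real (Suc n choose 0) * (-1)^0 * ff (q + real 0) j
       + (\<Sum>m\<le>n. real (Suc n choose Suc m) * (-1)^(Suc m) * ff (q + real (Suc m)) j)"
      unfolding SS_def by (rule sum.atMost_Suc_shift)
    also have "(\<Sum>m\<le>n. real (Suc n choose Suc m) * (-1)^(Suc m) * ff (q + real (Suc m)) j)
       = (\<Sum>m\<le>n. G (Suc m) - real (n choose m) * (-1)^m * ff (q + 1 + real m) j)"
    proof (intro sum.cong refl)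
      fix m
      have "q + real (Suc m) = q + 1 + real m" by simp
      then show "real (Suc n choose Suc m) * (-1)^(Suc m) * ff (q + real (Suc m)) j
        = G (Suc m) - real (n choose m) * (-1)^m * ff (q + 1 + real m) j"
        unfolding G_def by (simp add: algebra_simps)
    qed
    finally show ?thesis by (simp add: G_def)
  qed
  have e3: "SS n j (q + 1) = (\<Sum>m\<le>n. real (n choose m) * (-1)^m * ff (q + 1 + real m) j)"
    unfolding SS_def by (simp add: add_ac)
  show ?thesis unfolding e1 e2 e3 by (simp add: sum_subtractf)
qed

lemma SS_diff:
  assumes j1: "j \<ge> 1"
  shows "SS n j (q + 1) - SS n j q = real j * SS n (j - 1) q"
proof -
  obtain j' where j: "j = Suc j'" using j1 by (cases j) auto
  have "SS n j (q + 1) - SS n j q = (\<Sum>m\<le>n. real (n choose m) * (-1)^m * (ff (q + real m + 1) j - ff (q + real m) j))"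
    unfolding SS_def by (simp add: sum_subtractf[symmetric] algebra_simps add_ac)
  also have "\<dots> = (\<Sum>m\<le>n. real j * (real (n choose m) * (-1)^m * ff (q + real m) (j - 1)))"
    unfolding j by (intro sum.cong refl) (simp add: ff_diff)
  finally show ?thesis by (simp add: SS_def sum_distrib_left)
qed

lemma SS_zero: "j < n \<Longrightarrow> SS n j q = 0"
proof (induction n arbitrary: j q)
  case 0
  then show ?case by simp
next
  case (Suc n)
  show ?case
  proof (cases "j = 0")
    case True
    then show ?thesis unfolding SS_Suc by (simp add: SS_def)
  next
    case False
    have "SS (Suc n) j q = - (real j * SS n (j - 1) q)"
      unfolding SS_Suc using SS_diff[of j n q] False by simp
    also have "SS n (j - 1) q = 0" using Suc False by simp
    finally show ?thesis by simp
  qed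
qed

lemma phi_b:
  assumes "j < n" "0 < b"
  shows "phi n b p j b = 0"
proof -
  have "phi n b p j b = (\<Sum>m\<le>n. b powr (p + real n - real j) * (real (n choose m) * (-1)^m * ff (p + real m) j))"
    unfolding phi_def cc_def
  proof (intro sum.cong refl)
    fix m assume m: "m \<in> {..n}"
    have "b^(n-m) = b powr (real (n-m))" using assms by (simp add: powr_realpow)
    also have "real (n - m) = real n - real m" using m by (simp add: of_nat_diff)
    finally have 1: "b^(n-m) * b powr (p + real m - real j) = b powr (real n - real m) * b powr (p + real m - real j)"
      by simp
    have 2: "b powr (real n - real m) * b powr (p + real m - real j) = b powr ((real n - real m) + (p + real m - real j))"
      by (rule powr_add[symmetric])
    have 3: "(real n - real m) + (p + real m - real j) = p + real n - real j" by simp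
    have "b^(n-m) * b powr (p + real m - real j) = b powr (p + real n - real j)" unfolding 1 2 3 ..
    then show "real (n choose m) * b ^ (n - m) * (- 1) ^ m * ff (p + real m) j * b powr (p + real m - real j) =
       b powr (p + real n - real j) * (real (n choose m) * (- 1) ^ m * ff (p + real m) j)"
      by (simp add: algebra_simps)
  qed
  also have "\<dots> = b powr (p + real n - real j) * SS n j p" by (simp add: SS_def sum_distrib_left)
  finally show ?thesis using SS_zero[OF assms(1)] by simp
qed

lemma phi_0_eq:
  assumes x: "0 < x"
  shows "phi n b p 0 x = x powr p * (b - x)^n"
proof -
  have "(b - x)^n = (-x + b)^n" by simp
  also have "\<dots> = (\<Sum>m\<le>n. real (n choose m) * (-x)^m * b^(n-m))" by (rule binomial_ring)
  finally have "x powr p * (b - x)^n = (\<Sum>m\<le>n. x powr p * (real (n choose m) * (-x)^m * b^(n-m)))"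
    by (simp add: sum_distrib_left)
  also have "\<dots> = (\<Sum>m\<le>n. cc n b m * ff (p + real m) 0 * x powr (p + real m - real 0))"
  proof (intro sum.cong refl)
    fix m
    have "x powr p * x^m = x powr p * x powr (real m)" using x by (simp add: powr_realpow)
    also have "\<dots> = x powr (p + real m)" by (rule powr_add[symmetric])
    finally have 1: "x powr p * x^m = x powr (p + real m)" .
    have 2: "(-x)^m = (-1)^m * x^m" by (rule power_minus)
    have 3: "p + real m - real 0 = p + real m" by simp
    show "x powr p * (real (n choose m) * (-x)^m * b^(n-m)) = cc n b m * ff (p + real m) 0 * x powr (p + real m - real 0)"
      unfolding cc_def 2 3 ff_0 1[symmetric] by (simp only: mult_ac)
  qed
  finally show ?thesis by (simp add: phi_def)
qed

lemma si_bound: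
  fixes F :: "real \<Rightarrow> real"
  assumes cont: "continuous_on {0<..<b} F" and bd: "\<And>x. 0 < x \<Longrightarrow> x < b \<Longrightarrow> \<bar>F x\<bar> \<le> K * x powr e"
    and e: "e > -1" and b: "0 < b"
  shows "set_integrable lebesgue {0<..<b} F"
  unfolding set_integrable_def
proof (rule integrableI_bounded)
  show "(\<lambda>x. indicator {0<..<b} x *\<^sub>R F x) \<in> borel_measurable lebesgue"
    by (intro borel_to_leb borel_measurable_continuous_on_indicator cont) auto
  have "(\<integral>\<^sup>+x. ennreal (norm (indicator {0<..<b} x *\<^sub>R F x)) \<partial>lebesgue)
     \<le> (\<integral>\<^sup>+x. ennreal \<bar>K\<bar> * (indicator {0<..<b} x * ennreal (x powr e)) \<partial>lebesgue)"
  proof (intro nn_integral_mono)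
    fix x
    show "ennreal (norm (indicator {0<..<b} x *\<^sub>R F x)) \<le> ennreal \<bar>K\<bar> * (indicator {0<..<b} x * ennreal (x powr e))"
    proof (cases "x \<in> {0<..<b}")
      case True
      have "\<bar>F x\<bar> \<le> \<bar>K\<bar> * x powr e" using bd[of x] True
        by (meson abs_ge_self dual_order.trans mult_right_mono powr_ge_zero greaterThanLessThan_iff)
      then show ?thesis using True by (simp add: ennreal_mult[symmetric] ennreal_leI)
    qed simp
  qed
  also have "\<dots> = ennreal \<bar>K\<bar> * (\<integral>\<^sup>+x. indicator {0<..<b} x * ennreal (x powr e) \<partial>lborel)"
    by (simp add: nn_integral_completion nn_integral_cmult)
  also have "\<dots> < \<infinity>" using nn_powr_0[OF e b] by (simp add: ennreal_mult_less_top)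
  finally show "(\<integral>\<^sup>+x. ennreal (norm (indicator {0<..<b} x *\<^sub>R F x)) \<partial>lebesgue) < \<infinity>" .
qed

lemma phi_cont_open: "continuous_on {0<..} (phi n b p j)"
  unfolding phi_def[abs_def]
  by (intro continuous_on_sum continuous_on_mult continuous_on_const continuous_on_powr continuous_on_id) auto

lemma ff_bound:
  assumes "k \<le> n" "1 \<le> n" "m \<le> n" "real n - 1 < p" "p < real n"
  shows "\<bar>ff (p + real m) k\<bar> \<le> (2 * real n) ^ n"
proof -
  have "\<bar>ff (p + real m) k\<bar> = (\<Prod>i<k. \<bar>p + real m - real i\<bar>)" by (simp add: ff_def abs_prod)
  also have "\<dots> \<le> (\<Prod>i<k. 2 * real n)"
  proof (rule prod_mono)
    fix i assume "i \<in> {..<k}"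
    then have "real i \<le> real n - 1" using assms by auto
    then show "0 \<le> \<bar>p + real m - real i\<bar> \<and> \<bar>p + real m - real i\<bar> \<le> 2 * real n" using assms by auto
  qed
  also have "\<dots> = (2 * real n) ^ k" by simp
  also have "\<dots> \<le> (2 * real n) ^ n"
  proof (rule power_increasing[OF assms(1)])
    show "1 \<le> 2 * real n" using assms(2) by simp
  qed
  finally show ?thesis .
qed

lemma powr_bound:
  assumes "0 < x" "x < b" "0 \<le> e" "e \<le> 2 * real n"
  shows "x powr e \<le> max 1 b powr (2 * real n)"
proof -
  have "x powr e \<le> max 1 b powr e" using assms by (intro powr_mono2) auto
  also have "\<dots> \<le> max 1 b powr (2 * real n)" using assms by (intro powr_mono) auto
  finally show ?thesis .
qed

definition KK :: "nat \<Rightarrow> real \<Rightarrow> real" where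
  "KK n b = (\<Sum>m\<le>n. \<bar>cc n b m\<bar>) * ((2 * real n) ^ n * max 1 b powr (2 * real n))"

lemma KK_nonneg: "0 \<le> KK n b"
  unfolding KK_def by (intro mult_nonneg_nonneg sum_nonneg) auto

lemma phi_bound1:
  assumes n: "1 \<le> n" and d: "0 < \<delta>" "\<delta> < 1/2" and p: "p = real n - 1/2 + \<delta>"
    and k: "k \<le> n" and x: "0 < x" "x < b"
  shows "\<bar>phi n b p k x\<bar> \<le> KK n b * x powr (\<delta> - 1/2)"
proof -
  have "\<bar>phi n b p k x\<bar> \<le> (\<Sum>m\<le>n. \<bar>cc n b m * ff (p + real m) k * x powr (p + real m - real k)\<bar>)"
    unfolding phi_def by (rule sum_abs)
  also have "\<dots> \<le> (\<Sum>m\<le>n. \<bar>cc n b m\<bar> * ((2 * real n) ^ n * max 1 b powr (2 * real n)) * x powr (\<delta> - 1/2))"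
  proof (intro sum_mono)
    fix m assume m: "m \<in> {..n}"
    have e: "p + real m - real k = (\<delta> - 1/2) + (real n + real m - real k)" using p by simp
    have "x powr (p + real m - real k) = x powr (\<delta> - 1/2) * x powr (real n + real m - real k)"
      unfolding e by (rule powr_add)
    also have "\<dots> \<le> x powr (\<delta> - 1/2) * max 1 b powr (2 * real n)"
      by (intro mult_left_mono powr_bound) (use x k m in auto)
    finally have 1: "x powr (p + real m - real k) \<le> x powr (\<delta> - 1/2) * max 1 b powr (2 * real n)" .
    have 2: "\<bar>ff (p + real m) k\<bar> \<le> (2 * real n) ^ n" by (rule ff_bound) (use k m p d n in auto)
    have "\<bar>cc n b m * ff (p + real m) k * x powr (p + real m - real k)\<bar>
       = \<bar>cc n b m\<bar> * \<bar>ff (p + real m) k\<bar> * x powr (p + real m - real k)" by (simp add: abs_mult)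
    also have "\<dots> \<le> \<bar>cc n b m\<bar> * (2 * real n) ^ n * (x powr (\<delta> - 1/2) * max 1 b powr (2 * real n))"
      by (intro mult_mono 1 2 mult_left_mono) auto
    finally show "\<bar>cc n b m * ff (p + real m) k * x powr (p + real m - real k)\<bar>
       \<le> \<bar>cc n b m\<bar> * ((2 * real n) ^ n * max 1 b powr (2 * real n)) * x powr (\<delta> - 1/2)"
      by (simp add: algebra_simps)
  qed
  also have "\<dots> = KK n b * x powr (\<delta> - 1/2)" unfolding KK_def sum_distrib_right ..
  finally show ?thesis .
qed

lemma phi_bound2:
  assumes n: "1 \<le> n" and d: "0 < \<delta>" "\<delta> < 1/2" and p: "p = real n - 1/2 + \<delta>"
    and x: "0 < x" "x < b"
  shows "\<bar>phi n b p n x - b^n * ff p n * x powr (p - real n)\<bar> \<le> KK n b"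
proof -
  have "phi n b p n x = b^n * ff p n * x powr (p - real n) + (\<Sum>m\<in>{1..n}. cc n b m * ff (p + real m) n * x powr (p + real m - real n))"
  proof -
    have "{..n} = insert 0 {1..n}" by auto
    then show ?thesis unfolding phi_def by (simp add: cc_def)
  qed
  then have "\<bar>phi n b p n x - b^n * ff p n * x powr (p - real n)\<bar> = \<bar>\<Sum>m\<in>{1..n}. cc n b m * ff (p + real m) n * x powr (p + real m - real n)\<bar>"
    by simp
  also have "\<dots> \<le> (\<Sum>m\<in>{1..n}. \<bar>cc n b m * ff (p + real m) n * x powr (p + real m - real n)\<bar>)" by (rule sum_abs)
  also have "\<dots> \<le> (\<Sum>m\<in>{1..n}. \<bar>cc n b m\<bar> * ((2 * real n) ^ n * max 1 b powr (2 * real n)))"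
  proof (intro sum_mono)
    fix m assume m: "m \<in> {1..n}"
    have 1: "x powr (p + real m - real n) \<le> max 1 b powr (2 * real n)"
      by (rule powr_bound) (use x m p d in auto)
    have 2: "\<bar>ff (p + real m) n\<bar> \<le> (2 * real n) ^ n" by (rule ff_bound) (use m p d n in auto)
    have "\<bar>cc n b m * ff (p + real m) n * x powr (p + real m - real n)\<bar>
       = \<bar>cc n b m\<bar> * \<bar>ff (p + real m) n\<bar> * x powr (p + real m - real n)" by (simp add: abs_mult)
    also have "\<dots> \<le> \<bar>cc n b m\<bar> * (2 * real n) ^ n * max 1 b powr (2 * real n)"
      by (intro mult_mono 1 2 mult_left_mono) auto
    finally show "\<bar>cc n b m * ff (p + real m) n * x powr (p + real m - real n)\<bar>
       \<le> \<bar>cc n b m\<bar> * ((2 * real n) ^ n * max 1 b powr (2 * real n))" by (simp add: algebra_simps)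
  qed
  also have "\<dots> \<le> (\<Sum>m\<le>n. \<bar>cc n b m\<bar> * ((2 * real n) ^ n * max 1 b powr (2 * real n)))"
    by (intro sum_mono2) auto
  also have "\<dots> = KK n b" unfolding KK_def sum_distrib_right ..
  finally show ?thesis .
qed

lemma test_chain:
  fixes v :: "'a::{banach, second_countable_topology}"
  assumes b: "0 < b" and n: "1 \<le> n" and d: "0 < \<delta>" "\<delta> < 1/2" and p: "p = real n - 1/2 + \<delta>"
  shows "deriv_chain b n (\<lambda>x. phi n b p 0 x *\<^sub>R v) (\<lambda>j x. phi n b p j x *\<^sub>R v)
     \<and> (\<forall>k\<le>n. L2_on b (\<lambda>x. phi n b p k x *\<^sub>R v))"
proof -
  have pn: "real n - 1 < p" using p d by simp
  have cont: "continuous_on {0<..<b} (phi n b p k)" for k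
    by (rule continuous_on_subset[OF phi_cont_open]) auto
  have int_phi: "set_integrable lebesgue {0<..<b} (phi n b p k)" if k: "k \<le> n" for k
    by (rule si_bound[OF cont phi_bound1[OF n d p k] _ b]) (use d in auto)
  have ftc: "(phi n b p (Suc j) has_integral phi n b p j y) {0..y}" if j: "j < n" and y: "0 \<le> y" for j y
  proof -
    have "(phi n b p (Suc j) has_integral phi n b p j y - phi n b p j 0) {0..y}"
    proof (rule fundamental_theorem_of_calculus_interior[OF y])
      show "continuous_on {0..y} (phi n b p j)"
        by (rule continuous_on_subset[OF phi_cont[OF j pn]]) auto
      fix x assume "x \<in> {0<..<y}"
      then have "0 < x" by simp
      then show "(phi n b p j has_vector_derivative phi n b p (Suc j) x) (at x)"
        using phi_deriv[of x n b p j] by (simp add: has_real_derivative_iff_has_vector_derivative)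
    qed
    then show ?thesis by simp
  qed
  have lint: "(LINT t:{0..y}|lebesgue. phi n b p (Suc j) t) = phi n b p j y" if j: "j < n" and y: "0 \<le> y" "y \<le> b" for j y
  proof -
    have "set_integrable lebesgue {0..y} (phi n b p (Suc j))" by (rule Icc_Ioo(1)[OF int_phi y]) (use j in simp)
    then have "(LINT t:{0..y}|lebesgue. phi n b p (Suc j) t) = integral {0..y} (phi n b p (Suc j))"
      by (rule set_lebesgue_integral_eq_integral(2))
    also have "\<dots> = phi n b p j y" using ftc[OF j y(1)] by (rule integral_unique)
    finally show ?thesis .
  qed
  have lintv: "(LINT t:{0..y}|lebesgue. phi n b p (Suc j) t *\<^sub>R v) = phi n b p j y *\<^sub>R v" if j: "j < n" and y: "0 \<le> y" "y \<le> b" for j y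
  proof -
    have si: "set_integrable lebesgue {0..y} (phi n b p (Suc j))" by (rule Icc_Ioo(1)[OF int_phi y]) (use j in simp)
    have "(LINT t:{0..y}|lebesgue. phi n b p (Suc j) t *\<^sub>R v) = (LINT t|lebesgue. (indicator {0..y} t * phi n b p (Suc j) t) *\<^sub>R v)"
      unfolding set_lebesgue_integral_def by simp
    also have "\<dots> = (LINT t|lebesgue. indicator {0..y} t * phi n b p (Suc j) t) *\<^sub>R v"
      by (rule integral_scaleR_left) (use si in \<open>simp add: set_integrable_def\<close>)
    also have "(LINT t|lebesgue. indicator {0..y} t * phi n b p (Suc j) t) = (LINT t:{0..y}|lebesgue. phi n b p (Suc j) t)"
      unfolding set_lebesgue_integral_def by simp
    finally show ?thesis using lint[OF j y] by simp
  qed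
  have ac: "AC_with_deriv b (\<lambda>x. phi n b p j x *\<^sub>R v) (\<lambda>x. phi n b p (Suc j) x *\<^sub>R v)" if j: "j < n" for j
    unfolding AC_with_deriv_def
  proof (intro conjI ballI)
    show "set_integrable lebesgue {0<..<b} (\<lambda>x. phi n b p (Suc j) x *\<^sub>R v)"
      by (intro set_integrable_scaleR_left int_phi) (use j in simp)
    fix x assume "x \<in> {0..b}"
    then show "phi n b p j x *\<^sub>R v = phi n b p j 0 *\<^sub>R v + (LINT t:{0..x}|lebesgue. phi n b p (Suc j) t *\<^sub>R v)"
      using lintv[OF j] by simp
  qed
  have chain: "deriv_chain b n (\<lambda>x. phi n b p 0 x *\<^sub>R v) (\<lambda>j x. phi n b p j x *\<^sub>R v)"
    unfolding deriv_chain_def using ac phi_b[OF _ b] by simp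
  have L2: "L2_on b (\<lambda>x. phi n b p k x *\<^sub>R v)" if k: "k \<le> n" for k
    unfolding L2_on_def
  proof
    have "continuous_on {0<..<b} (\<lambda>x. phi n b p k x *\<^sub>R v)" by (intro continuous_intros cont)
    then show "set_borel_measurable lebesgue {0<..<b} (\<lambda>x. phi n b p k x *\<^sub>R v)"
      unfolding set_borel_measurable_def by (intro borel_to_leb borel_measurable_continuous_on_indicator) auto
    show "set_integrable lebesgue {0<..<b} (\<lambda>x. (norm (phi n b p k x *\<^sub>R v))\<^sup>2)"
    proof (rule si_bound[where K = "(KK n b)^2 * (norm v)^2" and e = "2 * \<delta> - 1"])
      show "continuous_on {0<..<b} (\<lambda>x. (norm (phi n b p k x *\<^sub>R v))\<^sup>2)" by (intro continuous_intros cont)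
      fix x assume x: "0 < x" "x < b"
      have B: "\<bar>phi n b p k x\<bar> \<le> KK n b * x powr (\<delta> - 1/2)" by (rule phi_bound1[OF n d p k x])
      have "(phi n b p k x)^2 \<le> (KK n b * x powr (\<delta> - 1/2))^2"
        using power_mono[OF B abs_ge_zero, of 2] by simp
      also have "\<dots> = (KK n b)^2 * x powr (2 * \<delta> - 1)"
      proof -
        have "(x powr (\<delta> - 1/2))^2 = x powr (\<delta> - 1/2) * x powr (\<delta> - 1/2)" by (rule power2_eq_square)
        also have "\<dots> = x powr ((\<delta> - 1/2) + (\<delta> - 1/2))" by (rule powr_add[symmetric])
        also have "(\<delta> - 1/2) + (\<delta> - 1/2) = 2 * \<delta> - 1" by simp
        finally show ?thesis by (simp only: power_mult_distrib)
      qed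
      finally have "(phi n b p k x)^2 * (norm v)^2 \<le> (KK n b)^2 * x powr (2 * \<delta> - 1) * (norm v)^2"
        by (rule mult_right_mono) simp
      then show "\<bar>(norm (phi n b p k x *\<^sub>R v))\<^sup>2\<bar> \<le> (KK n b)^2 * (norm v)^2 * x powr (2 * \<delta> - 1)"
        by (simp add: power_mult_distrib algebra_simps)
    qed (use d b in auto)
  qed
  show ?thesis using chain L2 by blast
qed

lemma sq_ineq:
  fixes a r \<eta> :: real
  assumes "0 < \<eta>"
  shows "(a + r)^2 \<le> (1 + \<eta>) * a^2 + (1 + 1/\<eta>) * r^2"
proof -
  have "0 \<le> (\<eta> * a - r)^2 / \<eta>" using assms by simp
  also have "(\<eta> * a - r)^2 / \<eta> = \<eta> * a^2 - 2 * a * r + r^2 / \<eta>"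
    using assms by (simp add: power2_eq_square field_simps)
  finally show ?thesis by (simp add: power2_eq_square algebra_simps add_divide_distrib)
qed

lemma nn_ind_Ioo: "0 \<le> b \<Longrightarrow> (\<integral>\<^sup>+x. indicator {0<..<b} x \<partial>lborel) = ennreal b"
  by simp

lemma E1:
  fixes v :: "'a::{banach, second_countable_topology}"
  assumes b: "0 < b" and n: "1 \<le> n" and d: "0 < \<delta>" "\<delta> < 1/2" and p: "p = real n - 1/2 + \<delta>" and eta: "0 < \<eta>"
  shows "(\<integral>\<^sup>+ x\<in>{0<..<b}. ennreal ((norm (phi n b p n x *\<^sub>R v))\<^sup>2) \<partial>lebesgue)
     \<le> ennreal ((norm v)^2 * ((1 + \<eta>) * (b^n * ff p n)^2 * (b powr (2*\<delta>) / (2*\<delta>)) + (1 + 1/\<eta>) * (KK n b)^2 * b))"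
proof -
  define A where "A = b^n * ff p n"
  define K where "K = KK n b"
  define c1 where "c1 = (norm v)^2 * (1 + \<eta>) * A^2"
  define c2 where "c2 = (norm v)^2 * (1 + 1/\<eta>) * K^2"
  have c1: "0 \<le> c1" and c2: "0 \<le> c2" using eta by (auto simp: c1_def c2_def)
  have "(\<integral>\<^sup>+ x\<in>{0<..<b}. ennreal ((norm (phi n b p n x *\<^sub>R v))\<^sup>2) \<partial>lebesgue)
     \<le> (\<integral>\<^sup>+x. ennreal c1 * (indicator {0<..<b} x * ennreal (x powr (2*\<delta> - 1))) + ennreal c2 * indicator {0<..<b} x \<partial>lborel)"
    unfolding nn_integral_completion
  proof (intro nn_integral_mono)
    fix x
    show "ennreal ((norm (phi n b p n x *\<^sub>R v))\<^sup>2) * indicator {0<..<b} x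
        \<le> ennreal c1 * (indicator {0<..<b} x * ennreal (x powr (2*\<delta> - 1))) + ennreal c2 * indicator {0<..<b} x"
    proof (cases "x \<in> {0<..<b}")
      case True
      then have x: "0 < x" "x < b" by auto
      define r where "r = phi n b p n x - A * x powr (p - real n)"
      have r: "\<bar>r\<bar> \<le> K" unfolding r_def A_def K_def by (rule phi_bound2[OF n d p x])
      have "(phi n b p n x)^2 = (A * x powr (p - real n) + r)^2" by (simp add: r_def)
      also have "\<dots> \<le> (1 + \<eta>) * (A * x powr (p - real n))^2 + (1 + 1/\<eta>) * r^2" by (rule sq_ineq[OF eta])
      also have "(A * x powr (p - real n))^2 = A^2 * x powr (2*\<delta> - 1)"
      proof -
        have "(x powr (p - real n))^2 = x powr (p - real n) * x powr (p - real n)" by (rule power2_eq_square)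
        also have "\<dots> = x powr ((p - real n) + (p - real n))" by (rule powr_add[symmetric])
        also have "(p - real n) + (p - real n) = 2 * \<delta> - 1" using p by simp
        finally show ?thesis by (simp only: power_mult_distrib)
      qed
      also have "r^2 \<le> K^2" using power_mono[OF r abs_ge_zero, of 2] by simp
      then have "(1 + 1/\<eta>) * r^2 \<le> (1 + 1/\<eta>) * K^2" using eta by (intro mult_left_mono) auto
      finally have "(phi n b p n x)^2 \<le> (1 + \<eta>) * (A^2 * x powr (2*\<delta> - 1)) + (1 + 1/\<eta>) * K^2" by simp
      then have "(phi n b p n x)^2 * (norm v)^2 \<le> ((1 + \<eta>) * (A^2 * x powr (2*\<delta> - 1)) + (1 + 1/\<eta>) * K^2) * (norm v)^2"
        by (rule mult_right_mono) simp
      then have le: "(norm (phi n b p n x *\<^sub>R v))\<^sup>2 \<le> c1 * x powr (2*\<delta> - 1) + c2"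
        by (simp add: c1_def c2_def power_mult_distrib algebra_simps)
      have "ennreal ((norm (phi n b p n x *\<^sub>R v))\<^sup>2) \<le> ennreal (c1 * x powr (2*\<delta> - 1) + c2)"
        by (rule ennreal_leI[OF le])
      also have "\<dots> = ennreal c1 * ennreal (x powr (2*\<delta> - 1)) + ennreal c2"
        using c1 c2 by (simp add: ennreal_plus ennreal_mult)
      finally show ?thesis using True by simp
    qed simp
  qed
  also have "\<dots> = ennreal c1 * (\<integral>\<^sup>+x. indicator {0<..<b} x * ennreal (x powr (2*\<delta> - 1)) \<partial>lborel)
      + ennreal c2 * (\<integral>\<^sup>+x. indicator {0<..<b} x \<partial>lborel)"
    by (subst nn_integral_add) (auto simp: nn_integral_cmult)
  also have "(\<integral>\<^sup>+x. indicator {0<..<b} x * ennreal (x powr (2*\<delta> - 1)) \<partial>lborel) = ennreal (b powr (2*\<delta>) / (2*\<delta>))"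
    using nn_powr_0[of "2*\<delta> - 1" b] d b by simp
  also have "(\<integral>\<^sup>+x. indicator {0<..<b} x \<partial>lborel) = ennreal b" using b by simp
  also have "ennreal c1 * ennreal (b powr (2*\<delta>) / (2*\<delta>)) + ennreal c2 * ennreal b
      = ennreal ((norm v)^2 * ((1 + \<eta>) * (b^n * ff p n)^2 * (b powr (2*\<delta>) / (2*\<delta>)) + (1 + 1/\<eta>) * (KK n b)^2 * b))"
  proof -
    have "ennreal c1 * ennreal (b powr (2*\<delta>) / (2*\<delta>)) + ennreal c2 * ennreal b
       = ennreal (c1 * (b powr (2*\<delta>) / (2*\<delta>)) + c2 * b)"
    proof -
      have X: "0 \<le> b powr (2*\<delta>) / (2*\<delta>)" using d by simp
      have 1: "ennreal c1 * ennreal (b powr (2*\<delta>) / (2*\<delta>)) = ennreal (c1 * (b powr (2*\<delta>) / (2*\<delta>)))"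
        by (rule ennreal_mult[symmetric]) (use c1 X in auto)
      have 2: "ennreal c2 * ennreal b = ennreal (c2 * b)" by (rule ennreal_mult[symmetric]) (use c2 b in auto)
      have 3: "ennreal (c1 * (b powr (2*\<delta>) / (2*\<delta>))) + ennreal (c2 * b) = ennreal (c1 * (b powr (2*\<delta>) / (2*\<delta>)) + c2 * b)"
        by (rule ennreal_plus[symmetric]) (use c1 c2 b X in \<open>auto intro!: mult_nonneg_nonneg simp del: times_divide_eq_right\<close>)
      show ?thesis unfolding 1 2 3 ..
    qed
    also have "c1 * (b powr (2*\<delta>) / (2*\<delta>)) + c2 * b = (norm v)^2 * ((1 + \<eta>) * (b^n * ff p n)^2 * (b powr (2*\<delta>) / (2*\<delta>)) + (1 + 1/\<eta>) * (KK n b)^2 * b)"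
      by (simp add: c1_def c2_def A_def K_def algebra_simps)
    finally show ?thesis .
  qed
  finally show ?thesis .
qed

lemma E2:
  fixes v :: "'a::{banach, second_countable_topology}"
  assumes b: "0 < b" and n: "1 \<le> n" and d: "0 < \<delta>" "\<delta> < 1/2" and p: "p = real n - 1/2 + \<delta>"
    and c: "0 < c" "c \<le> b/2"
  shows "ennreal ((norm v)^2 * (b - c)^(2*n) * (c powr (2*\<delta>) / (2*\<delta>)))
     \<le> (\<integral>\<^sup>+ x\<in>{0<..<b}. ennreal ((norm (phi n b p 0 x *\<^sub>R v))\<^sup>2 / (dist_bd b x) ^ (2 * n)) \<partial>lebesgue)"
proof -
  define c1 where "c1 = (norm v)^2 * (b - c)^(2*n)"
  have c1: "0 \<le> c1" using c by (simp add: c1_def)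
  have "ennreal ((norm v)^2 * (b - c)^(2*n) * (c powr (2*\<delta>) / (2*\<delta>)))
      = ennreal c1 * (\<integral>\<^sup>+x. indicator {0<..<c} x * ennreal (x powr (2*\<delta> - 1)) \<partial>lborel)"
  proof -
    have "ennreal ((norm v)^2 * (b - c)^(2*n) * (c powr (2*\<delta>) / (2*\<delta>))) = ennreal c1 * ennreal (c powr (2*\<delta>) / (2*\<delta>))"
      unfolding c1_def using c d by (intro ennreal_mult) auto
    also have "ennreal (c powr (2*\<delta>) / (2*\<delta>)) = (\<integral>\<^sup>+x. indicator {0<..<c} x * ennreal (x powr (2*\<delta> - 1)) \<partial>lborel)"
      using nn_powr_0[of "2*\<delta> - 1" c] d c by simp
    finally show ?thesis .
  qed
  also have "\<dots> = (\<integral>\<^sup>+x. ennreal c1 * (indicator {0<..<c} x * ennreal (x powr (2*\<delta> - 1))) \<partial>lborel)"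
    by (rule nn_integral_cmult[symmetric]) measurable
  also have "\<dots> \<le> (\<integral>\<^sup>+ x\<in>{0<..<b}. ennreal ((norm (phi n b p 0 x *\<^sub>R v))\<^sup>2 / (dist_bd b x) ^ (2 * n)) \<partial>lebesgue)"
    unfolding nn_integral_completion
  proof (intro nn_integral_mono)
    fix x
    show "ennreal c1 * (indicator {0<..<c} x * ennreal (x powr (2*\<delta> - 1)))
       \<le> ennreal ((norm (phi n b p 0 x *\<^sub>R v))\<^sup>2 / (dist_bd b x) ^ (2 * n)) * indicator {0<..<b} x"
    proof (cases "x \<in> {0<..<c}")
      case True
      then have x: "0 < x" "x < c" by auto
      have xb: "x \<in> {0<..<b}" using x c by auto
      have dd: "dist_bd b x = x" using x c by (auto simp: dist_bd_def)
      have "(norm (phi n b p 0 x *\<^sub>R v))\<^sup>2 / (dist_bd b x) ^ (2 * n)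
          = (norm v)^2 * (b - x)^(2*n) * ((x powr p)^2 / x^(2*n))"
        using x by (simp add: dd phi_0_eq power_mult_distrib power_mult[symmetric] algebra_simps)
      also have "(x powr p)^2 / x^(2*n) = x powr (2*\<delta> - 1)"
      proof -
        have "(x powr p)^2 = x powr (2*p)" using x by (simp add: power2_eq_square powr_add[symmetric])
        moreover have "x^(2*n) = x powr (2 * real n)" using x powr_realpow[of x "2*n"] by simp
        ultimately have "(x powr p)^2 / x^(2*n) = x powr (2*p) / x powr (2 * real n)" by simp
        also have "\<dots> = x powr (2*p - 2 * real n)" by (rule powr_diff[symmetric])
        also have "2*p - 2 * real n = 2*\<delta> - 1" using p by simp
        finally show ?thesis .
      qed
      finally have eq: "(norm (phi n b p 0 x *\<^sub>R v))\<^sup>2 / (dist_bd b x) ^ (2 * n) = (norm v)^2 * (b - x)^(2*n) * x powr (2*\<delta> - 1)" .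
      have "(b - c)^(2*n) \<le> (b - x)^(2*n)" using x c by (intro power_mono) auto
      then have "c1 * x powr (2*\<delta> - 1) \<le> (norm v)^2 * (b - x)^(2*n) * x powr (2*\<delta> - 1)"
        unfolding c1_def by (intro mult_right_mono mult_left_mono) auto
      then have "ennreal (c1 * x powr (2*\<delta> - 1)) \<le> ennreal ((norm v)^2 * (b - x)^(2*n) * x powr (2*\<delta> - 1))"
        by (rule ennreal_leI)
      then show ?thesis using True xb c1 unfolding eq by (simp add: ennreal_mult)
    qed simp
  qed
  finally show ?thesis .
qed

lemma ff_half: "(ff (real n - 1/2) n)^2 = (real (odd_double_fact n))^2 / 2^(2*n)"
proof -
  have "ff (real n - 1/2) n = (\<Prod>i<n. real (n - Suc i) + 1/2)"
    unfolding ff_def by (intro prod.cong refl) (auto simp: of_nat_diff)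
  also have "\<dots> = (\<Prod>k<n. real k + 1/2)" by (rule prod.nat_diff_reindex)
  also have "\<dots> = (\<Prod>k<n. (2 * real k + 1) / 2)" by (intro prod.cong refl) (simp add: field_simps)
  also have "\<dots> = real (odd_double_fact n) / 2^n" by (simp add: prod_dividef odd_double_fact_prod)
  finally show ?thesis by (simp add: power_divide power_mult[symmetric] mult.commute)
qed

lemma ff_tendsto: "((\<lambda>\<delta>. ff (real n - 1/2 + \<delta>) n) \<longlongrightarrow> ff (real n - 1/2) n) (at_right 0)"
proof -
  have c: "isCont (\<lambda>q. ff q n) q" for q unfolding ff_def by (intro continuous_intros)
  have "((\<lambda>\<delta>. real n - 1/2 + \<delta>) \<longlongrightarrow> real n - 1/2 + 0) (at_right 0)" by (intro tendsto_intros)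
  then have "((\<lambda>\<delta>. real n - 1/2 + \<delta>) \<longlongrightarrow> real n - 1/2) (at_right 0)" by simp
  from isCont_tendsto_compose[OF c this] show ?thesis .
qed

lemma choose_params:
  assumes b: "0 < b" and n: "1 \<le> n" and e: "0 < \<epsilon>"
  shows "\<exists>\<eta> c \<delta>. 0 < \<eta> \<and> 0 < c \<and> c \<le> b/2 \<and> 0 < \<delta> \<and> \<delta> < 1/2 \<and>
     (1 + \<eta>) * (b^n * ff (real n - 1/2 + \<delta>) n)^2 * (b powr (2*\<delta>) / (2*\<delta>)) + (1 + 1/\<eta>) * (KK n b)^2 * b
       \<le> ((real (odd_double_fact n))\<^sup>2 / 2 ^ (2 * n) + \<epsilon>) * ((b - c)^(2*n) * (c powr (2*\<delta>) / (2*\<delta>)))"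
proof -
  define C where "C = (real (odd_double_fact n))\<^sup>2 / 2 ^ (2 * n)"
  define K where "K = KK n b"
  define B where "B = b^(2*n)"
  have "0 < real (odd_double_fact n)" unfolding odd_double_fact_prod by (rule prod_pos) auto
  then have C: "0 < C" by (simp add: C_def)
  have B: "0 < B" using b by (simp add: B_def)
  define \<eta> where "\<eta> = \<epsilon> / (3 * C)"
  have eta: "0 < \<eta>" using C e by (simp add: \<eta>_def)
  have etaC: "(1 + \<eta>) * C = C + \<epsilon>/3" using C by (simp add: \<eta>_def field_simps)
  have lim: "((\<lambda>c. (C + \<epsilon>) * (b - c)^(2*n)) \<longlongrightarrow> (C + \<epsilon>) * (b - 0)^(2*n)) (at_right 0)"
    by (intro tendsto_intros)
  have ineq: "(C + 2*\<epsilon>/3) * B < (C + \<epsilon>) * (b - 0)^(2*n)" using B e by (simp add: B_def)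
  have ev: "\<forall>\<^sub>F c in at_right 0. (C + 2*\<epsilon>/3) * B < (C + \<epsilon>) * (b - c)^(2*n)"
    by (rule order_tendstoD(1)[OF lim ineq])
  then obtain t where t: "t > 0" "\<And>y. y > 0 \<Longrightarrow> y < t \<Longrightarrow> (C + 2*\<epsilon>/3) * B < (C + \<epsilon>) * (b - y)^(2*n)"
    unfolding eventually_at_right_field by auto
  define c where "c = min (t/2) (b/2)"
  have c: "0 < c" "c \<le> b/2" "c < t" using t b by (auto simp: c_def)
  have cB: "(C + 2*\<epsilon>/3) * B < (C + \<epsilon>) * (b - c)^(2*n)" using t(2)[of c] c by simp
  define F where "F \<delta> = (1 + \<eta>) * (b^n * ff (real n - 1/2 + \<delta>) n)^2 * b powr (2*\<delta>) + 2*\<delta> * ((1 + 1/\<eta>) * K^2 * b)" for \<delta>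
  define G where "G \<delta> = (C + \<epsilon>) * (b - c)^(2*n) * c powr (2*\<delta>)" for \<delta>
  have "(F \<longlongrightarrow> (1 + \<eta>) * (b^n * ff (real n - 1/2) n)^2 * b powr (2*0) + 2*0 * ((1 + 1/\<eta>) * K^2 * b)) (at_right 0)"
    unfolding F_def using b by (intro tendsto_intros ff_tendsto) auto
  moreover have "(1 + \<eta>) * (b^n * ff (real n - 1/2) n)^2 * b powr (2*0) + 2*0 * ((1 + 1/\<eta>) * K^2 * b) = (C + \<epsilon>/3) * B"
  proof -
    have "(b^n * ff (real n - 1/2) n)^2 = B * C"
      by (simp add: power_mult_distrib ff_half C_def B_def power_mult[symmetric] mult.commute)
    then show ?thesis using etaC b by (simp add: algebra_simps)
  qed
  ultimately have Ft: "(F \<longlongrightarrow> (C + \<epsilon>/3) * B) (at_right 0)" by simp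
  have "(G \<longlongrightarrow> (C + \<epsilon>) * (b - c)^(2*n) * c powr (2*0)) (at_right 0)"
    unfolding G_def using c by (intro tendsto_intros) auto
  then have Gt: "(G \<longlongrightarrow> (C + \<epsilon>) * (b - c)^(2*n)) (at_right 0)" using c by simp
  define T where "T = (C + \<epsilon>/2) * B"
  have "(C + \<epsilon>/3) * B < T" using B e by (simp add: T_def)
  then have ev1: "\<forall>\<^sub>F \<delta> in at_right 0. F \<delta> < T" by (rule order_tendstoD(2)[OF Ft])
  have "T < (C + \<epsilon>) * (b - c)^(2*n)" using cB B e unfolding T_def
  proof -
    have "(C + \<epsilon>/2) * B < (C + 2*\<epsilon>/3) * B" using B e by (intro mult_strict_right_mono) auto
    then show "(C + \<epsilon>/2) * B < (C + \<epsilon>) * (b - c)^(2*n)" using cB by linarith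
  qed
  then have ev2: "\<forall>\<^sub>F \<delta> in at_right 0. T < G \<delta>" by (rule order_tendstoD(1)[OF Gt])
  from eventually_conj[OF ev1 ev2] obtain t2 where t2: "t2 > 0" "\<And>y. y > 0 \<Longrightarrow> y < t2 \<Longrightarrow> F y < T \<and> T < G y"
    unfolding eventually_at_right_field by auto
  define \<delta> where "\<delta> = min (t2/2) (1/4)"
  have d: "0 < \<delta>" "\<delta> < 1/2" "\<delta> < t2" using t2 by (auto simp: \<delta>_def)
  have FG: "F \<delta> \<le> G \<delta>" using t2(2)[OF d(1) d(3)] by simp
  have "(1 + \<eta>) * (b^n * ff (real n - 1/2 + \<delta>) n)^2 * (b powr (2*\<delta>) / (2*\<delta>)) + (1 + 1/\<eta>) * K^2 * b = F \<delta> / (2*\<delta>)"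
  proof -
    have "F \<delta> / (2*\<delta>) = (1 + \<eta>) * (b^n * ff (real n - 1/2 + \<delta>) n)^2 * b powr (2*\<delta>) / (2*\<delta>)
        + 2*\<delta> * ((1 + 1/\<eta>) * K^2 * b) / (2*\<delta>)"
      unfolding F_def by (rule add_divide_distrib)
    also have "2*\<delta> * ((1 + 1/\<eta>) * K^2 * b) / (2*\<delta>) = (1 + 1/\<eta>) * K^2 * b"
      using d by simp
    finally show ?thesis by simp
  qed
  also have "\<dots> \<le> G \<delta> / (2*\<delta>)" using FG d by (simp add: divide_right_mono)
  also have "\<dots> = (C + \<epsilon>) * ((b - c)^(2*n) * (c powr (2*\<delta>) / (2*\<delta>)))" by (simp add: G_def)
  finally show ?thesis using eta c d unfolding C_def K_def by blast
qed

lemma part_iii: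
  fixes v :: "'a::{banach, second_countable_topology}"
  assumes b: "0 < b" and n: "1 \<le> n" and v: "v \<noteq> 0" and e: "0 < \<epsilon>"
  shows "\<exists>(f :: real \<Rightarrow> 'a) g. deriv_chain b n f g \<and> (\<forall>k\<le>n. L2_on b (g k))
         \<and> (\<exists>x\<in>{0..b}. f x \<noteq> 0) \<and>
         \<not> ((\<integral>\<^sup>+ x\<in>{0<..<b}. ennreal ((norm (g n x))\<^sup>2) \<partial>lebesgue)
           > ennreal ((real (odd_double_fact n))\<^sup>2 / 2 ^ (2 * n) + \<epsilon>) * (\<integral>\<^sup>+ x\<in>{0<..<b}. ennreal ((norm (f x))\<^sup>2 / (dist_bd b x) ^ (2 * n)) \<partial>lebesgue))"
proof -
  define C where "C = (real (odd_double_fact n))\<^sup>2 / 2 ^ (2 * n)"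
  obtain \<eta> c \<delta> where eta: "0 < \<eta>" and c: "0 < c" "c \<le> b/2" and d: "0 < \<delta>" "\<delta> < 1/2"
    and ineq: "(1 + \<eta>) * (b^n * ff (real n - 1/2 + \<delta>) n)^2 * (b powr (2*\<delta>) / (2*\<delta>)) + (1 + 1/\<eta>) * (KK n b)^2 * b
       \<le> (C + \<epsilon>) * ((b - c)^(2*n) * (c powr (2*\<delta>) / (2*\<delta>)))"
    using choose_params[OF b n e] unfolding C_def by blast
  define p where "p = real n - 1/2 + \<delta>"
  define g where "g j x = phi n b p j x *\<^sub>R v" for j x
  define f where "f x = phi n b p 0 x *\<^sub>R v" for x
  have TC: "deriv_chain b n f g \<and> (\<forall>k\<le>n. L2_on b (g k))"
    using test_chain[OF b n d p_def, of v] unfolding f_def[abs_def] g_def[abs_def] by simp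
  have nz: "f (b/2) \<noteq> 0"
  proof -
    have "phi n b p 0 (b/2) = (b/2) powr p * (b - b/2)^n" using b by (rule phi_0_eq[of "b/2", simplified])
    moreover have "0 < (b/2) powr p * (b - b/2)^n" using b by simp
    ultimately show ?thesis using v b by (simp add: f_def)
  qed
  have Y: "0 \<le> (b - c)^(2*n) * (c powr (2*\<delta>) / (2*\<delta>))" using c d b by simp
  have "(\<integral>\<^sup>+ x\<in>{0<..<b}. ennreal ((norm (g n x))\<^sup>2) \<partial>lebesgue)
      \<le> ennreal ((norm v)^2 * ((1 + \<eta>) * (b^n * ff p n)^2 * (b powr (2*\<delta>) / (2*\<delta>)) + (1 + 1/\<eta>) * (KK n b)^2 * b))"
    unfolding g_def by (rule E1[OF b n d p_def eta])
  also have "\<dots> \<le> ennreal ((norm v)^2 * ((C + \<epsilon>) * ((b - c)^(2*n) * (c powr (2*\<delta>) / (2*\<delta>)))))"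
    using ineq by (intro ennreal_leI mult_left_mono) (auto simp: p_def)
  also have "\<dots> = ennreal (C + \<epsilon>) * ennreal ((norm v)^2 * (b - c)^(2*n) * (c powr (2*\<delta>) / (2*\<delta>)))"
  proof -
    have Cn: "0 \<le> C + \<epsilon>" using e by (simp add: C_def)
    have Y2: "0 \<le> (norm v)^2 * (b - c)^(2*n) * (c powr (2*\<delta>) / (2*\<delta>))"
      using Y mult_nonneg_nonneg[OF zero_le_power2[of "norm v"] Y] by (simp only: mult.assoc)
    have eq: "(norm v)^2 * ((C + \<epsilon>) * ((b - c)^(2*n) * (c powr (2*\<delta>) / (2*\<delta>))))
       = (C + \<epsilon>) * ((norm v)^2 * (b - c)^(2*n) * (c powr (2*\<delta>) / (2*\<delta>)))" by (simp only: mult_ac)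
    show ?thesis unfolding eq by (rule ennreal_mult[OF Cn Y2])
  qed
  also have "\<dots> \<le> ennreal (C + \<epsilon>) * (\<integral>\<^sup>+ x\<in>{0<..<b}. ennreal ((norm (f x))\<^sup>2 / (dist_bd b x) ^ (2 * n)) \<partial>lebesgue)"
    unfolding f_def by (intro mult_left_mono E2[OF b n d p_def c]) simp
  finally have le: "(\<integral>\<^sup>+ x\<in>{0<..<b}. ennreal ((norm (g n x))\<^sup>2) \<partial>lebesgue)
     \<le> ennreal (C + \<epsilon>) * (\<integral>\<^sup>+ x\<in>{0<..<b}. ennreal ((norm (f x))\<^sup>2 / (dist_bd b x) ^ (2 * n)) \<partial>lebesgue)" .
  have "b/2 \<in> {0..b}" using b by simp
  then show ?thesis using TC nz le unfolding C_def by (intro exI[of _ f] exI[of _ g]) (auto simp: not_less)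
qed


theorem theorem9p2:
  fixes b :: real and n :: nat
  assumes "0 < b" and "1 \<le> n"
  defines "C \<equiv> (real (odd_double_fact n))\<^sup>2 / 2 ^ (2 * n)"
  shows
   "(H_n b n = (H0_n b n :: (real \<Rightarrow> 'a::{real_inner, banach, second_countable_topology}) set))
    \<and> (\<exists>c1 c2. 0 < c1 \<and> 0 < c2 \<and>
         (\<forall>(f :: real \<Rightarrow> 'a) g. deriv_chain b n f g \<and> (\<forall>k\<le>n. L2_on b (g k)) \<longrightarrow>
            c1 * sobolev_norm b n g \<le> L2_norm_on b (g n) \<and>
            L2_norm_on b (g n) \<le> c2 * sobolev_norm b n g))
    \<and> (\<forall>(f :: real \<Rightarrow> 'a) g. deriv_chain b n f g \<and> (\<forall>k\<le>n. L2_on b (g k))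
         \<and> (\<exists>x\<in>{0..b}. f x \<noteq> 0) \<longrightarrow>
         (\<integral>\<^sup>+ x\<in>{0<..<b}. ennreal ((norm (g n x))\<^sup>2) \<partial>lebesgue)
           > ennreal C * (\<integral>\<^sup>+ x\<in>{0<..<b}. ennreal ((norm (f x))\<^sup>2 / (dist_bd b x) ^ (2 * n)) \<partial>lebesgue))
    \<and> ((\<exists>v :: 'a. v \<noteq> 0) \<longrightarrow>
        (\<forall>\<epsilon>>0. \<exists>(f :: real \<Rightarrow> 'a) g. deriv_chain b n f g \<and> (\<forall>k\<le>n. L2_on b (g k))
         \<and> (\<exists>x\<in>{0..b}. f x \<noteq> 0) \<and>
         \<not> ((\<integral>\<^sup>+ x\<in>{0<..<b}. ennreal ((norm (g n x))\<^sup>2) \<partial>lebesgue)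
           > ennreal (C + \<epsilon>) * (\<integral>\<^sup>+ x\<in>{0<..<b}. ennreal ((norm (f x))\<^sup>2 / (dist_bd b x) ^ (2 * n)) \<partial>lebesgue))))"
proof -
  have 1: "H_n b n = (H0_n b n :: (real \<Rightarrow> 'a) set)" by (rule part_i_set[OF assms(1)])
  have 2: "\<exists>c1 c2. 0 < c1 \<and> 0 < c2 \<and>
         (\<forall>(f :: real \<Rightarrow> 'a) g. deriv_chain b n f g \<and> (\<forall>k\<le>n. L2_on b (g k)) \<longrightarrow>
            c1 * sobolev_norm b n g \<le> L2_norm_on b (g n) \<and>
            L2_norm_on b (g n) \<le> c2 * sobolev_norm b n g)" by (rule part_i_norm[OF assms(1)])
  have 3: "\<forall>(f :: real \<Rightarrow> 'a) g. deriv_chain b n f g \<and> (\<forall>k\<le>n. L2_on b (g k))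
         \<and> (\<exists>x\<in>{0..b}. f x \<noteq> 0) \<longrightarrow>
         (\<integral>\<^sup>+ x\<in>{0<..<b}. ennreal ((norm (g n x))\<^sup>2) \<partial>lebesgue)
           > ennreal C * (\<integral>\<^sup>+ x\<in>{0<..<b}. ennreal ((norm (f x))\<^sup>2 / (dist_bd b x) ^ (2 * n)) \<partial>lebesgue)"
    unfolding C_def using part_ii[OF assms(1,2)] by blast
  have 4: "(\<exists>v :: 'a. v \<noteq> 0) \<longrightarrow>
        (\<forall>\<epsilon>>0. \<exists>(f :: real \<Rightarrow> 'a) g. deriv_chain b n f g \<and> (\<forall>k\<le>n. L2_on b (g k))
         \<and> (\<exists>x\<in>{0..b}. f x \<noteq> 0) \<and>
         \<not> ((\<integral>\<^sup>+ x\<in>{0<..<b}. ennreal ((norm (g n x))\<^sup>2) \<partial>lebesgue)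
           > ennreal (C + \<epsilon>) * (\<integral>\<^sup>+ x\<in>{0<..<b}. ennreal ((norm (f x))\<^sup>2 / (dist_bd b x) ^ (2 * n)) \<partial>lebesgue)))"
    unfolding C_def using part_iii[OF assms(1,2)] by blast
  show ?thesis using 1 2 3 4 by blast
qed

end
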